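(* Let $A$ be a finite alphabet and let $X\subseteq A^{\mathbb{Z}}$ be a transitive subshift of finite type. Let $F\colon X\to X$ be a cellular automaton on $X$ such that the dynamical system $(X,F)$ has at least one equicontinuity point. Then $F$ is onto ($F(X)=X$) if and only if the set of $F$-periodic points (points $x\in X$ with $F^n(x)=x$ for some $n\ge 1$) is dense in $X$.
   Context: $A^{\mathbb{Z}}$ carries the product topology, given by the metric $d(x,y)=2^{-i}$ with $i=\min\{|j| : x_j\neq y_j\}$, and the shift $\sigma((x_i)_{i})=(x_{i+1})_i$. A subshift is a closed $\sigma$-invariant subset $X\subseteq A^{\mathbb{Z}}$; $L(X)$ is the set of finite words occurring as blocks of consecutive coordinates of points of $X$. $X$ is transitive if for all $u,v\in L(X)$ there is $w$ with $uwv\in L(X)$; it is of finite type if it is the set of all sequences avoiding a finite set of forbidden words. A cellular automaton on $X$ is a continuous map $F\colon X\to X$ with $F\circ\sigma=\sigma\circ F$. A point $x\in X$ is an equicontinuity point of $(X,F)$ if for every $\varepsilon>0$ there is $\eta>0$ such that $d(x,y)\le\eta$, $y\in X$, implies $d(F^i(x),F^i(y))\le\varepsilon$ for all integers $i>0$. *)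

theory Defs
  imports "HOL-Analysis.Analysis"
begin

definition cdist :: "(int \<Rightarrow> 'a) \<Rightarrow> (int \<Rightarrow> 'a) \<Rightarrow> real" where
  "cdist x y = (if x = y then 0
     else (1/2) ^ (LEAST n::nat. \<exists>j. nat \<bar>j\<bar> = n \<and> x j \<noteq> y j))"

definition shift :: "(int \<Rightarrow> 'a) \<Rightarrow> (int \<Rightarrow> 'a)" where
  "shift x = (\<lambda>i. x (i + 1))"

definition occurs_at :: "'a list \<Rightarrow> (int \<Rightarrow> 'a) \<Rightarrow> int \<Rightarrow> bool" where
  "occurs_at w x i \<longleftrightarrow> w = map (\<lambda>k. x (i + int k)) [0..<length w]"

definition language :: "(int \<Rightarrow> 'a) set \<Rightarrow> 'a list set" where
  "language X = {w. \<exists>x\<in>X. \<exists>i. occurs_at w x i}"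

definition cclosed :: "(int \<Rightarrow> 'a) set \<Rightarrow> bool" where
  "cclosed X \<longleftrightarrow> (\<forall>x. (\<forall>e>0. \<exists>y\<in>X. cdist x y < e) \<longrightarrow> x \<in> X)"

definition subshift :: "(int \<Rightarrow> 'a) set \<Rightarrow> bool" where
  "subshift X \<longleftrightarrow> cclosed X \<and> shift ` X = X"

definition transitive_subshift :: "(int \<Rightarrow> 'a) set \<Rightarrow> bool" where
  "transitive_subshift X \<longleftrightarrow> subshift X \<and>
     (\<forall>u\<in>language X. \<forall>v\<in>language X. \<exists>w. u @ w @ v \<in> language X)"

definition SFT :: "(int \<Rightarrow> 'a) set \<Rightarrow> bool" where
  "SFT X \<longleftrightarrow> (\<exists>Fb :: 'a list set. finite Fb \<and>
     X = {x. \<forall>w\<in>Fb. \<forall>i. \<not> occurs_at w x i})"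

definition ccontinuous_on :: "(int \<Rightarrow> 'a) set \<Rightarrow> ((int \<Rightarrow> 'a) \<Rightarrow> (int \<Rightarrow> 'a)) \<Rightarrow> bool" where
  "ccontinuous_on X F \<longleftrightarrow> (\<forall>x\<in>X. \<forall>e>0. \<exists>d>0. \<forall>y\<in>X. cdist x y < d \<longrightarrow> cdist (F x) (F y) < e)"

definition cellular_automaton :: "(int \<Rightarrow> 'a) set \<Rightarrow> ((int \<Rightarrow> 'a) \<Rightarrow> (int \<Rightarrow> 'a)) \<Rightarrow> bool" where
  "cellular_automaton X F \<longleftrightarrow> F ` X \<subseteq> X \<and> ccontinuous_on X F \<and>
     (\<forall>x\<in>X. F (shift x) = shift (F x))"

definition equicontinuity_point :: "(int \<Rightarrow> 'a) set \<Rightarrow> ((int \<Rightarrow> 'a) \<Rightarrow> (int \<Rightarrow> 'a)) \<Rightarrow> (int \<Rightarrow> 'a) \<Rightarrow> bool" where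
  "equicontinuity_point X F x \<longleftrightarrow> x \<in> X \<and>
     (\<forall>e>0. \<exists>\<eta>>0. \<forall>y\<in>X. cdist x y \<le> \<eta> \<longrightarrow>
        (\<forall>i::nat. i > 0 \<longrightarrow> cdist ((F ^^ i) x) ((F ^^ i) y) \<le> e))"

definition periodic_points :: "(int \<Rightarrow> 'a) set \<Rightarrow> ((int \<Rightarrow> 'a) \<Rightarrow> (int \<Rightarrow> 'a)) \<Rightarrow> (int \<Rightarrow> 'a) set" where
  "periodic_points X F = {x\<in>X. \<exists>n::nat. n \<ge> 1 \<and> (F ^^ n) x = x}"

definition cdense_in :: "(int \<Rightarrow> 'a) set \<Rightarrow> (int \<Rightarrow> 'a) set \<Rightarrow> bool" where
  "cdense_in P X \<longleftrightarrow> P \<subseteq> X \<and> (\<forall>x\<in>X. \<forall>e>0. \<exists>y\<in>P. cdist x y < e)"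

end

theory Submission
  imports Defs "HOL-Library.Diagonal_Subsequence"
begin

lemma cdist_less_pow:
  "cdist x y < (1/2)^n \<longleftrightarrow> (\<forall>j. nat \<bar>j\<bar> \<le> n \<longrightarrow> x j = y j)"
proof (cases "x = y")
  case True thus ?thesis by (simp add: cdist_def)
next
  case False
  then obtain j0 where j0: "x j0 \<noteq> y j0" by auto
  define k where "k = (LEAST n::nat. \<exists>j. nat \<bar>j\<bar> = n \<and> x j \<noteq> y j)"
  have ex: "\<exists>j. nat \<bar>j\<bar> = k \<and> x j \<noteq> y j"
    unfolding k_def by (rule LeastI[of _ "nat \<bar>j0\<bar>"]) (use j0 in auto)
  have min: "\<And>j. nat \<bar>j\<bar> < k \<Longrightarrow> x j = y j"
    unfolding k_def using not_less_Least by blast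
  have d: "cdist x y = (1/2)^k" using False by (simp add: cdist_def k_def)
  have "((1/2::real)^k < (1/2)^n) \<longleftrightarrow> n < k" by (simp add: power_strict_decreasing_iff)
  moreover have "n < k \<longleftrightarrow> (\<forall>j. nat \<bar>j\<bar> \<le> n \<longrightarrow> x j = y j)"
  proof
    assume "n < k" thus "\<forall>j. nat \<bar>j\<bar> \<le> n \<longrightarrow> x j = y j" using min by auto
  next
    assume a: "\<forall>j. nat \<bar>j\<bar> \<le> n \<longrightarrow> x j = y j"
    show "n < k"
    proof (rule ccontr)
      assume "\<not> n < k"
      from ex obtain j where j: "nat \<bar>j\<bar> = k" "x j \<noteq> y j" by blast
      have "nat \<bar>j\<bar> \<le> n" using j(1) \<open>\<not> n < k\<close> by simp
      thus False using a j(2) by auto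
    qed
  qed
  ultimately show ?thesis using d by simp
qed

lemma cdist_le_pow:
  "cdist x y \<le> (1/2)^(Suc n) \<longleftrightarrow> (\<forall>j. nat \<bar>j\<bar> \<le> n \<longrightarrow> x j = y j)"
proof (cases "x = y")
  case True thus ?thesis by (simp add: cdist_def)
next
  case False
  define k where "k = (LEAST n::nat. \<exists>j. nat \<bar>j\<bar> = n \<and> x j \<noteq> y j)"
  have d: "cdist x y = (1/2)^k" using False by (simp add: cdist_def k_def)
  have e1: "((1/2::real)^k \<le> (1/2)^(Suc n)) \<longleftrightarrow> Suc n \<le> k"
    by (rule power_decreasing_iff) simp_all
  have e2: "((1/2::real)^k < (1/2)^n) \<longleftrightarrow> n < k"
    by (rule power_strict_decreasing_iff) simp_all
  show ?thesis unfolding cdist_less_pow[of x y n, symmetric]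
    by (simp only: d e1 e2 Suc_le_eq)
qed

lemma cdist_nonneg: "cdist x y \<ge> 0" by (simp add: cdist_def)

lemma small_pow: "e > (0::real) \<Longrightarrow> \<exists>n. (1/2::real)^n < e"
  by (simp add: real_arch_pow_inv)

definition tr :: "int \<Rightarrow> (int \<Rightarrow> 'a) \<Rightarrow> (int \<Rightarrow> 'a)" where
  "tr c x = (\<lambda>i. x (i + c))"

lemma tr_apply: "tr c x i = x (i + c)" by (simp add: tr_def)
lemma tr_tr[simp]: "tr a (tr b x) = tr (a + b) x" unfolding tr_def by (rule ext) (simp add: algebra_simps)
lemma tr_0[simp]: "tr 0 x = x" by (simp add: tr_def)
lemma shift_tr: "shift = tr 1" by (rule ext) (simp add: shift_def tr_def)

lemma occurs_at_iff: "occurs_at w x i \<longleftrightarrow> (\<forall>k<length w. x (i + int k) = w ! k)"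
  unfolding occurs_at_def list_eq_iff_nth_eq by auto

definition win :: "(int \<Rightarrow> 'a) \<Rightarrow> int \<Rightarrow> nat \<Rightarrow> 'a list" where
  "win x a n = map (\<lambda>k. x (a + int k)) [0..<n]"

lemma length_win[simp]: "length (win x a n) = n" by (simp add: win_def)
lemma nth_win[simp]: "k < n \<Longrightarrow> win x a n ! k = x (a + int k)" by (simp add: win_def)
lemma occurs_win: "occurs_at (win x a n) x a" by (simp add: occurs_at_iff)
lemma occurs_at_win: "occurs_at w x a \<longleftrightarrow> w = win x a (length w)"
  by (simp add: occurs_at_def win_def)

locale sftx =
  fixes X :: "(int \<Rightarrow> 'a::finite) set"
  assumes ts: "transitive_subshift X" and sft: "SFT X"
begin

definition Fb :: "'a list set" where
  "Fb = (SOME Fb. finite Fb \<and> X = {x. \<forall>w\<in>Fb. \<forall>i. \<not> occurs_at w x i})"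

lemma Fb: "finite Fb" "X = {x. \<forall>w\<in>Fb. \<forall>i. \<not> occurs_at w x i}"
proof -
  have "\<exists>Fb. finite Fb \<and> X = {x. \<forall>w\<in>Fb. \<forall>i. \<not> occurs_at w x i}"
    using sft unfolding SFT_def by blast
  from someI_ex[OF this] show "finite Fb" "X = {x. \<forall>w\<in>Fb. \<forall>i. \<not> occurs_at w x i}"
    unfolding Fb_def by auto
qed

definition M :: nat where "M = Max (insert 2 (length ` Fb))"

lemma M_ge2: "2 \<le> M" unfolding M_def using Fb(1) by simp
lemma M_ge: "w \<in> Fb \<Longrightarrow> length w \<le> M" unfolding M_def using Fb(1) by simp

lemma memX: "x \<in> X \<longleftrightarrow> (\<forall>w\<in>Fb. \<forall>i. \<not> occurs_at w x i)"
  using Fb(2) by blast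

lemma local_adm:
  assumes "\<And>i. \<exists>x\<in>X. \<forall>k<M. x (i + int k) = z (i + int k)"
  shows "z \<in> X"
  unfolding memX
proof (intro ballI allI notI)
  fix w i assume w: "w \<in> Fb" and occ: "occurs_at w z i"
  obtain x where x: "x \<in> X" "\<forall>k<M. x (i + int k) = z (i + int k)" using assms by blast
  have "occurs_at w x i" using occ x(2) M_ge[OF w] by (auto simp: occurs_at_iff)
  thus False using x(1) w memX by blast
qed

lemma glue:
  assumes "x \<in> X" "y \<in> X" "\<And>j. a \<le> j \<Longrightarrow> j < a + int M \<Longrightarrow> x j = y j"
  shows "(\<lambda>j. if j < a then x j else y j) \<in> X"
proof (rule local_adm)
  fix i
  show "\<exists>u\<in>X. \<forall>k<M. u (i + int k) = (if i + int k < a then x (i + int k) else y (i + int k))"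
  proof (cases "i < a")
    case True
    show ?thesis by (rule bexI[of _ x]) (use assms(1) assms(3) True in auto)
  next
    case False
    show ?thesis by (rule bexI[of _ y]) (use assms(2) False in auto)
  qed
qed

lemma subshift: "subshift X" using ts unfolding transitive_subshift_def by blast
lemma closedX: "cclosed X" using subshift unfolding subshift_def by blast
lemma shiftX: "shift ` X = X" using subshift unfolding subshift_def by blast

lemma tr_X: "x \<in> X \<Longrightarrow> tr c x \<in> X"
proof (induction c arbitrary: x rule: int_induct[where k=0])
  case base thus ?case by simp
next
  case (step1 i)
  have "tr (i + 1) x = shift (tr i x)" by (simp add: shift_tr add.commute)
  have "tr i x \<in> X" using step1 by (simp add: tr_def)
  hence "shift (tr i x) \<in> shift ` X" by blast
  thus ?case using \<open>tr (i + 1) x = shift (tr i x)\<close> shiftX by simp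
next
  case (step2 i)
  obtain z where z: "z \<in> X" "tr i x = shift z" using step2 shiftX by blast
  have "tr (i - 1) x = z"
  proof
    fix j show "tr (i - 1) x j = z j"
      using fun_cong[OF z(2), of "j - 1"] by (simp add: shift_def tr_def algebra_simps)
  qed
  thus ?case using z by simp
qed

lemma langI: "x \<in> X \<Longrightarrow> win x a n \<in> language X"
  unfolding language_def using occurs_win by blast

lemma langE:
  assumes "u \<in> language X" obtains x where "x \<in> X" "occurs_at u x 0"
proof -
  obtain x i where "x \<in> X" "occurs_at u x i" using assms unfolding language_def by blast
  hence "tr i x \<in> X" "occurs_at u (tr i x) 0" using tr_X by (simp, simp add: occurs_at_iff tr_def add.commute)
  thus ?thesis using that by blast
qed

lemma trans_lang: "u \<in> language X \<Longrightarrow> v \<in> language X \<Longrightarrow> \<exists>w. u @ w @ v \<in> language X"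
  using ts unfolding transitive_subshift_def by blast

end

context sftx begin

lemma seq_compact:
  fixes s :: "nat \<Rightarrow> int \<Rightarrow> 'a"
  assumes sX: "\<And>n. s n \<in> X"
  shows "\<exists>(r::nat\<Rightarrow>nat) x. strict_mono r \<and> x \<in> X \<and> (\<forall>N. \<exists>K. \<forall>k\<ge>K. \<forall>j. nat \<bar>j\<bar> \<le> N \<longrightarrow> s (r k) j = x j)"
proof -
  define P where "P = (\<lambda>n (r::nat\<Rightarrow>nat). \<forall>k j. nat \<bar>j\<bar> \<le> n \<longrightarrow> s (r k) j = s (r 0) j)"
  interpret ss: subseqs P
  proof
    fix n and s' :: "nat \<Rightarrow> nat" assume sm: "strict_mono s'"
    define g where "g = (\<lambda>k. win (s (s' k)) (- int n) (2*n+1))"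
    have fin: "finite (g ` UNIV)"
    proof (rule finite_subset)
      show "g ` UNIV \<subseteq> {xs. set xs \<subseteq> UNIV \<and> length xs = 2*n+1}" by (simp add: g_def image_subset_iff)
      show "finite {xs. set xs \<subseteq> (UNIV::'a set) \<and> length xs = 2*n+1}"
        by (rule finite_lists_length_eq) simp
    qed
    obtain a0 where a0: "\<not> finite {a\<in>UNIV. g a = g a0}"
      using pigeonhole_infinite[OF infinite_UNIV_nat fin] by blast
    obtain r :: "nat \<Rightarrow> nat" where r: "strict_mono r" "\<forall>k. r k \<in> {a\<in>UNIV. g a = g a0}"
      using infinite_enumerate[OF a0] by blast
    have "P n (s' \<circ> r)"
      unfolding P_def
    proof (intro allI impI)
      fix k j assume j: "nat \<bar>j\<bar> \<le> n"
      have e: "g (r k) = g (r 0)" using r(2) by simp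
      define t where "t = nat (j + int n)"
      have t: "t < 2*n+1" "- int n + int t = j" using j by (auto simp: t_def)
      have "g (r k) ! t = g (r 0) ! t" using e by simp
      thus "s ((s' \<circ> r) k) j = s ((s' \<circ> r) 0) j" using t by (simp add: g_def)
    qed
    thus "\<exists>r'. strict_mono r' \<and> P n (s' \<circ> r')" using r(1) by blast
  qed
  define d where "d = ss.diagseq"
  have dm: "strict_mono d" unfolding d_def by (rule ss.subseq_diagseq)
  have hold: "\<And>n. P n (d \<circ> (+) (Suc n))"
    unfolding d_def
  proof (rule ss.diagseq_holds)
    fix r s' n assume "P n s'"
    thus "P n (s' \<circ> r)" unfolding P_def comp_def
    proof (intro allI impI)
      fix k j assume a: "\<forall>k j. nat \<bar>j\<bar> \<le> n \<longrightarrow> s (s' k) j = s (s' 0) j" and j: "nat \<bar>j\<bar> \<le> n"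
      have "s (s' (r k)) j = s (s' 0) j" "s (s' (r 0)) j = s (s' 0) j" using a j by blast+
      thus "s (s' (r k)) j = s (s' (r 0)) j" by simp
    qed
  qed
  define x where "x = (\<lambda>j. s (d (Suc (nat \<bar>j\<bar>))) j)"
  have conv: "\<And>k j. Suc (nat \<bar>j\<bar>) \<le> k \<Longrightarrow> s (d k) j = x j"
  proof -
    fix k j assume kj: "Suc (nat \<bar>j\<bar>) \<le> k"
    then obtain k' where k': "k = Suc (nat \<bar>j\<bar>) + k'" using le_Suc_ex by blast
    have "s ((d \<circ> (+) (Suc (nat \<bar>j\<bar>))) k') j = s ((d \<circ> (+) (Suc (nat \<bar>j\<bar>))) 0) j"
      using hold[of "nat \<bar>j\<bar>"] unfolding P_def by blast
    thus "s (d k) j = x j" by (simp add: k' x_def)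
  qed
  have xX: "x \<in> X"
    using closedX unfolding cclosed_def
  proof (elim allE impE)
    show "\<forall>e>0. \<exists>y\<in>X. cdist x y < e"
    proof (intro allI impI)
      fix e :: real assume "e > 0"
      then obtain N where N: "(1/2::real)^N < e" using small_pow by blast
      have "\<forall>j. nat \<bar>j\<bar> \<le> N \<longrightarrow> x j = s (d (Suc N)) j"
        using conv by simp
      hence "cdist x (s (d (Suc N))) < (1/2)^N"
        unfolding cdist_less_pow .
      hence "cdist x (s (d (Suc N))) < e" using N by linarith
      thus "\<exists>y\<in>X. cdist x y < e" using sX by blast
    qed
  qed
  have "\<forall>N. \<exists>K. \<forall>k\<ge>K. \<forall>j. nat \<bar>j\<bar> \<le> N \<longrightarrow> s (d k) j = x j"
  proof (intro allI exI impI)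
    fix N k j assume "Suc N \<le> k" "nat \<bar>j\<bar> \<le> N"
    thus "s (d k) j = x j" using conv by simp
  qed
  thus ?thesis using dm xX by blast
qed

end

locale ca = sftx X for X :: "(int \<Rightarrow> 'a::finite) set" +
  fixes F :: "(int \<Rightarrow> 'a) \<Rightarrow> (int \<Rightarrow> 'a)"
  assumes ca: "cellular_automaton X F"
begin

lemma FX: "x \<in> X \<Longrightarrow> F x \<in> X" using ca unfolding cellular_automaton_def by blast
lemma F_shift: "x \<in> X \<Longrightarrow> F (shift x) = shift (F x)" using ca unfolding cellular_automaton_def by blast
lemma Fcont: "ccontinuous_on X F" using ca unfolding cellular_automaton_def by blast

lemma F_tr: "x \<in> X \<Longrightarrow> F (tr c x) = tr c (F x)"
proof (induction c arbitrary: x rule: int_induct[where k=0])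
  case base thus ?case by simp
next
  case (step1 i)
  have xi: "tr i x \<in> X" using tr_X step1 by blast
  have "F (tr (i + 1) x) = F (tr 1 (tr i x))" by (simp only: tr_tr add.commute)
  also have "\<dots> = tr 1 (F (tr i x))" using F_shift[OF xi] by (simp only: shift_tr)
  also have "\<dots> = tr 1 (tr i (F x))" using step1 by metis
  also have "\<dots> = tr (i + 1) (F x)" by (simp only: tr_tr add.commute)
  finally show ?case .
next
  case (step2 i)
  have xi: "tr (i - 1) x \<in> X" using tr_X step2 by blast
  have "F (tr i x) = F (shift (tr (i - 1) x))" by (simp add: shift_tr)
  also have "\<dots> = shift (F (tr (i - 1) x))" using F_shift xi by blast
  finally have "tr i (F x) = tr 1 (F (tr (i - 1) x))" using step2 by (simp add: shift_tr)
  hence "tr (-1) (tr i (F x)) = tr (-1) (tr 1 (F (tr (i - 1) x)))" by simp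
  thus ?case by simp
qed

lemma Fn_X: "x \<in> X \<Longrightarrow> (F ^^ n) x \<in> X"
  by (induction n) (auto simp: FX)

lemma Fn_tr: "x \<in> X \<Longrightarrow> (F ^^ n) (tr c x) = tr c ((F ^^ n) x)"
  by (induction n) (auto simp: F_tr Fn_X)

definition loc :: "((int \<Rightarrow> 'a) \<Rightarrow> (int \<Rightarrow> 'a)) \<Rightarrow> nat \<Rightarrow> bool" where
  "loc G r \<longleftrightarrow> (\<forall>x\<in>X. \<forall>y\<in>X. \<forall>i. (\<forall>j. \<bar>j - i\<bar> \<le> int r \<longrightarrow> x j = y j) \<longrightarrow> G x i = G y i)"

lemma loc0: "\<exists>r. \<forall>x\<in>X. \<forall>y\<in>X. (\<forall>j. nat \<bar>j\<bar> \<le> r \<longrightarrow> x j = y j) \<longrightarrow> F x 0 = F y 0"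
proof (rule ccontr)
  assume "\<not> ?thesis"
  hence "\<forall>r. \<exists>x\<in>X. \<exists>y\<in>X. (\<forall>j. nat \<bar>j\<bar> \<le> r \<longrightarrow> x j = y j) \<and> F x 0 \<noteq> F y 0" by blast
  then obtain xs ys :: "nat \<Rightarrow> int \<Rightarrow> 'a" where xy: "\<And>r. xs r \<in> X" "\<And>r. ys r \<in> X"
    "\<And>r j. nat \<bar>j\<bar> \<le> r \<Longrightarrow> xs r j = ys r j" "\<And>r. F (xs r) 0 \<noteq> F (ys r) 0"
    by metis
  obtain rr :: "nat \<Rightarrow> nat" and z where rz: "strict_mono rr" "z \<in> X"
    "\<And>N. \<exists>K. \<forall>k\<ge>K. \<forall>j. nat \<bar>j\<bar> \<le> N \<longrightarrow> xs (rr k) j = z j"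
    using seq_compact[of xs, OF xy(1)] by blast
  obtain d where d: "d > 0" "\<And>y. y \<in> X \<Longrightarrow> cdist z y < d \<Longrightarrow> cdist (F z) (F y) < 1"
    using Fcont rz(2) unfolding ccontinuous_on_def by (meson zero_less_one)
  obtain N where N: "(1/2::real)^N < d" using small_pow d(1) by blast
  obtain K where K: "\<And>k j. k \<ge> K \<Longrightarrow> nat \<bar>j\<bar> \<le> N \<Longrightarrow> xs (rr k) j = z j" using rz(3) by blast
  define k where "k = max K N"
  have rk: "rr k \<ge> N" using seq_suble[OF rz(1), of k] by (simp add: k_def)
  have c1: "cdist z (xs (rr k)) < (1/2)^N"
    unfolding cdist_less_pow using K[of k] by (simp add: k_def)
  have c2: "cdist z (ys (rr k)) < (1/2)^N"
    unfolding cdist_less_pow using K[of k] xy(3)[of _ "rr k"] rk by (simp add: k_def)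
  have "cdist (F z) (F (xs (rr k))) < (1/2)^0" using d(2) xy(1) c1 N by simp
  hence e1: "F z 0 = F (xs (rr k)) 0" unfolding cdist_less_pow by simp
  have "cdist (F z) (F (ys (rr k))) < (1/2)^0" using d(2) xy(2) c2 N by simp
  hence e2: "F z 0 = F (ys (rr k)) 0" unfolding cdist_less_pow by simp
  show False using e1 e2 xy(4) by metis
qed

definition rho :: nat where
  "rho = (SOME r. \<forall>x\<in>X. \<forall>y\<in>X. (\<forall>j. nat \<bar>j\<bar> \<le> r \<longrightarrow> x j = y j) \<longrightarrow> F x 0 = F y 0)"

lemma rho0: "x \<in> X \<Longrightarrow> y \<in> X \<Longrightarrow> (\<forall>j. nat \<bar>j\<bar> \<le> rho \<longrightarrow> x j = y j) \<Longrightarrow> F x 0 = F y 0"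
  using someI_ex[OF loc0] unfolding rho_def by blast

lemma loc_F: "loc F rho"
  unfolding loc_def
proof (intro ballI allI impI)
  fix x y i assume x: "x \<in> X" and y: "y \<in> X" and a: "\<forall>j. \<bar>j - i\<bar> \<le> int rho \<longrightarrow> x j = y j"
  have "F (tr i x) 0 = F (tr i y) 0"
  proof (rule rho0)
    show "tr i x \<in> X" "tr i y \<in> X" using x y tr_X by auto
    show "\<forall>j. nat \<bar>j\<bar> \<le> rho \<longrightarrow> tr i x j = tr i y j" using a by (auto simp: tr_def)
  qed
  thus "F x i = F y i" using x y by (metis F_tr tr_apply add_0)
qed

lemma loc_Fn: "loc (F ^^ n) (n * rho)"
proof (induction n)
  case 0 show ?case by (simp add: loc_def)
next
  case (Suc n)
  show ?case unfolding loc_def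
  proof (intro ballI allI impI)
    fix x y i assume x: "x \<in> X" and y: "y \<in> X"
      and a: "\<forall>j. \<bar>j - i\<bar> \<le> int (Suc n * rho) \<longrightarrow> x j = y j"
    have "\<forall>j. \<bar>j - i\<bar> \<le> int rho \<longrightarrow> (F ^^ n) x j = (F ^^ n) y j"
    proof (intro allI impI)
      fix j assume j: "\<bar>j - i\<bar> \<le> int rho"
      show "(F ^^ n) x j = (F ^^ n) y j"
        using Suc.IH x y unfolding loc_def
      proof (elim ballE allE impE)
        show "\<forall>k. \<bar>k - j\<bar> \<le> int (n * rho) \<longrightarrow> x k = y k"
          using a j by (auto simp: algebra_simps)
      qed auto
    qed
    thus "(F ^^ Suc n) x i = (F ^^ Suc n) y i"
      using loc_F Fn_X x y unfolding loc_def by simp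
  qed
qed

lemma dense_imp_onto:
  assumes "cdense_in (periodic_points X F) X"
  shows "F ` X = X"
proof
  show "F ` X \<subseteq> X" using FX by auto
  show "X \<subseteq> F ` X"
  proof
    fix y assume yX: "y \<in> X"
    have "\<forall>n. \<exists>q\<in>X. cdist y (F q) < (1/2)^n"
    proof
      fix n
      obtain p where p: "p \<in> periodic_points X F" "cdist y p < (1/2)^n"
        using assms yX unfolding cdense_in_def by (meson zero_less_divide_1_iff zero_less_numeral zero_less_power)
      obtain k where k: "p \<in> X" "k \<ge> 1" "(F ^^ k) p = p" using p(1) unfolding periodic_points_def by blast
      have "F ((F ^^ (k - 1)) p) = p" using k by (metis One_nat_def Suc_pred' comp_apply funpow.simps(2) less_eq_Suc_le)
      thus "\<exists>q\<in>X. cdist y (F q) < (1/2)^n" using p(2) Fn_X[OF k(1)] by metis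
    qed
    then obtain qs where qs: "\<And>n. qs n \<in> X" "\<And>n. cdist y (F (qs n)) < (1/2)^n" by metis
    obtain rr :: "nat \<Rightarrow> nat" and z where rz: "strict_mono rr" "z \<in> X"
      "\<And>N. \<exists>K. \<forall>k\<ge>K. \<forall>j. nat \<bar>j\<bar> \<le> N \<longrightarrow> qs (rr k) j = z j"
      using seq_compact[of qs, OF qs(1)] by blast
    have "F z = y"
    proof
      fix i
      obtain K where K: "\<And>k j. k \<ge> K \<Longrightarrow> nat \<bar>j\<bar> \<le> nat \<bar>i\<bar> + rho \<Longrightarrow> qs (rr k) j = z j"
        using rz(3) by blast
      define k where "k = max K (nat \<bar>i\<bar>)"
      have rk: "rr k \<ge> nat \<bar>i\<bar>" using seq_suble[OF rz(1), of k] by (simp add: k_def)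
      have "F z i = F (qs (rr k)) i"
        using loc_F rz(2) qs(1) unfolding loc_def
      proof (elim ballE allE impE)
        show "\<forall>j. \<bar>j - i\<bar> \<le> int rho \<longrightarrow> z j = qs (rr k) j"
          using K[of k] by (auto simp: k_def)
      qed auto
      also have "\<dots> = y i"
        using qs(2)[of "rr k"] rk unfolding cdist_less_pow by auto
      finally show "F z i = y i" .
    qed
    thus "y \<in> F ` X" using rz(2) by blast
  qed
qed


end

locale eqca = ca X F for X :: "(int \<Rightarrow> 'a::finite) set" and F +
  fixes e :: "int \<Rightarrow> 'a"
  assumes eqp: "equicontinuity_point X F e"
begin

lemma eX: "e \<in> X" using eqp unfolding equicontinuity_point_def by blast

definition wall :: "nat \<Rightarrow> (int \<Rightarrow> 'a) \<Rightarrow> int \<Rightarrow> bool" where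
  "wall m x c \<longleftrightarrow> (\<forall>j. \<bar>j\<bar> \<le> int m \<longrightarrow> x (c + j) = e j)"

definition Blk :: "nat \<Rightarrow> nat \<Rightarrow> bool" where
  "Blk m R \<longleftrightarrow> (\<forall>x\<in>X. \<forall>c. wall m x c \<longrightarrow>
      (\<forall>n j. \<bar>j\<bar> \<le> int R \<longrightarrow> (F ^^ n) x (c + j) = (F ^^ n) e j))"

lemma blocking: "\<exists>m\<ge>R. Blk m R"
proof -
  have "(0::real) < (1/2)^(Suc R)" by simp
  then obtain \<eta> where \<eta>: "\<eta> > 0" "\<And>y. y \<in> X \<Longrightarrow> cdist e y \<le> \<eta> \<Longrightarrow>
      (\<forall>i::nat. i > 0 \<longrightarrow> cdist ((F ^^ i) e) ((F ^^ i) y) \<le> (1/2)^(Suc R))"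
    using eqp unfolding equicontinuity_point_def by blast
  obtain N where N: "(1/2::real)^N < \<eta>" using small_pow \<eta>(1) by blast
  define m where "m = max R N"
  have "Blk m R"
    unfolding Blk_def
  proof (intro ballI allI impI)
    fix x c n j assume x: "x \<in> X" and w: "wall m x c" and j: "\<bar>j\<bar> \<le> int R"
    define y where "y = tr c x"
    have yX: "y \<in> X" using tr_X x by (simp add: y_def)
    have ag: "\<forall>j. nat \<bar>j\<bar> \<le> m \<longrightarrow> e j = y j"
      using w unfolding wall_def y_def by (auto simp: tr_def add.commute)
    have "cdist e y \<le> (1/2)^(Suc m)" unfolding cdist_le_pow using ag .
    also have "\<dots> \<le> (1/2)^N" by (rule power_decreasing) (auto simp: m_def)
    finally have cd: "cdist e y \<le> \<eta>" using N by linarith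
    show "(F ^^ n) x (c + j) = (F ^^ n) e j"
    proof (cases "n = 0")
      case True thus ?thesis using w j unfolding wall_def by (simp add: m_def)
    next
      case False
      hence "cdist ((F ^^ n) e) ((F ^^ n) y) \<le> (1/2)^(Suc R)" using \<eta>(2)[OF yX cd] by simp
      hence "(F ^^ n) e j = (F ^^ n) y j" unfolding cdist_le_pow using j by auto
      also have "(F ^^ n) y = tr c ((F ^^ n) x)" using Fn_tr x by (simp add: y_def)
      finally show ?thesis by (simp add: tr_def add.commute)
    qed
  qed
  moreover have "m \<ge> R" by (simp add: m_def)
  ultimately show ?thesis by blast
qed

lemma shield:
  assumes xX: "x \<in> X" and yX: "y \<in> X" and blk: "Blk m R" and rR: "rho \<le> R"
    and ag: "\<forall>i\<in>J. x i = y i"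
    and J: "\<forall>i\<in>J. (\<exists>c\<in>Cs. \<bar>i - c\<bar> \<le> int R) \<or> (\<forall>j. \<bar>j - i\<bar> \<le> int rho \<longrightarrow> j \<in> J)"
    and W: "\<forall>c\<in>Cs. wall m x c \<and> wall m y c"
  shows "\<forall>i\<in>J. (F ^^ n) x i = (F ^^ n) y i"
proof (induction n)
  case 0 thus ?case using ag by simp
next
  case (Suc n)
  show ?case
  proof
    fix i assume iJ: "i \<in> J"
    from J iJ show "(F ^^ Suc n) x i = (F ^^ Suc n) y i"
    proof (elim ballE disjE)
      assume "\<exists>c\<in>Cs. \<bar>i - c\<bar> \<le> int R"
      then obtain c where c: "c \<in> Cs" "\<bar>i - c\<bar> \<le> int R" by blast
      have "(F ^^ Suc n) x (c + (i - c)) = (F ^^ Suc n) e (i - c)"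
        using blk xX W c unfolding Blk_def by blast
      moreover have "(F ^^ Suc n) y (c + (i - c)) = (F ^^ Suc n) e (i - c)"
        using blk yX W c unfolding Blk_def by blast
      ultimately show ?thesis by simp
    next
      assume win: "\<forall>j. \<bar>j - i\<bar> \<le> int rho \<longrightarrow> j \<in> J"
      have "F ((F ^^ n) x) i = F ((F ^^ n) y) i"
        using loc_F Fn_X[OF xX, of n] Fn_X[OF yX, of n] Suc.IH win unfolding loc_def by blast
      thus ?thesis by simp
    qed (use iJ in auto)
  qed
qed

lemma shield2:
  assumes xX: "x \<in> X" and yX: "y \<in> X" and blk: "Blk m R" and rR: "rho \<le> R" and Rm: "R \<le> m"
    and c12: "c1 \<le> c2"
    and wx: "wall m x c1" "wall m x c2" and wy: "wall m y c1" "wall m y c2"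
    and ag: "\<And>i. c1 - int m \<le> i \<Longrightarrow> i \<le> c2 + int m \<Longrightarrow> x i = y i"
    and i: "c1 - int R \<le> i" "i \<le> c2 + int R"
  shows "(F ^^ n) x i = (F ^^ n) y i"
proof -
  define J where "J = {i. c1 - int R \<le> i \<and> i \<le> c2 + int R}"
  have "\<forall>i\<in>J. (F ^^ n) x i = (F ^^ n) y i"
  proof (rule shield[OF xX yX blk rR, where Cs="{c1, c2}"])
    show "\<forall>i\<in>J. x i = y i" using ag Rm by (auto simp: J_def)
    show "\<forall>c\<in>{c1, c2}. wall m x c \<and> wall m y c" using wx wy by auto
    show "\<forall>i\<in>J. (\<exists>c\<in>{c1, c2}. \<bar>i - c\<bar> \<le> int R) \<or> (\<forall>j. \<bar>j - i\<bar> \<le> int rho \<longrightarrow> j \<in> J)"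
      using rR by (auto simp: J_def)
  qed
  thus ?thesis using i by (auto simp: J_def)
qed

lemma shieldL:
  assumes xX: "x \<in> X" and yX: "y \<in> X" and blk: "Blk m R" and rR: "rho \<le> R" and Rm: "R \<le> m"
    and wx: "wall m x c" and wy: "wall m y c"
    and ag: "\<And>i. i \<le> c + int m \<Longrightarrow> x i = y i"
    and i: "i \<le> c + int R"
  shows "(F ^^ n) x i = (F ^^ n) y i"
proof -
  define J where "J = {i. i \<le> c + int R}"
  have "\<forall>i\<in>J. (F ^^ n) x i = (F ^^ n) y i"
  proof (rule shield[OF xX yX blk rR, where Cs="{c}"])
    show "\<forall>i\<in>J. x i = y i" using ag Rm by (auto simp: J_def)
    show "\<forall>c\<in>{c}. wall m x c \<and> wall m y c" using wx wy by auto
    show "\<forall>i\<in>J. (\<exists>c\<in>{c}. \<bar>i - c\<bar> \<le> int R) \<or> (\<forall>j. \<bar>j - i\<bar> \<le> int rho \<longrightarrow> j \<in> J)"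
      using rR by (auto simp: J_def)
  qed
  thus ?thesis using i by (auto simp: J_def)
qed

lemma shieldR:
  assumes xX: "x \<in> X" and yX: "y \<in> X" and blk: "Blk m R" and rR: "rho \<le> R" and Rm: "R \<le> m"
    and wx: "wall m x c" and wy: "wall m y c"
    and ag: "\<And>i. c - int m \<le> i \<Longrightarrow> x i = y i"
    and i: "c - int R \<le> i"
  shows "(F ^^ n) x i = (F ^^ n) y i"
proof -
  define J where "J = {i. c - int R \<le> i}"
  have "\<forall>i\<in>J. (F ^^ n) x i = (F ^^ n) y i"
  proof (rule shield[OF xX yX blk rR, where Cs="{c}"])
    show "\<forall>i\<in>J. x i = y i" using ag Rm by (auto simp: J_def)
    show "\<forall>c\<in>{c}. wall m x c \<and> wall m y c" using wx wy by auto
    show "\<forall>i\<in>J. (\<exists>c\<in>{c}. \<bar>i - c\<bar> \<le> int R) \<or> (\<forall>j. \<bar>j - i\<bar> \<le> int rho \<longrightarrow> j \<in> J)"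
      using rR by (auto simp: J_def)
  qed
  thus ?thesis using i by (auto simp: J_def)
qed

end

lemma occurs_at_append:
  "occurs_at (a @ b) p s \<longleftrightarrow> occurs_at a p s \<and> occurs_at b p (s + int (length a))"
  unfolding occurs_at_iff
proof safe
  fix k assume h: "\<forall>k<length (a @ b). p (s + int k) = (a @ b) ! k"
  { assume "k < length a" thus "p (s + int k) = a ! k" using h[rule_format, of k] by (simp add: nth_append) }
  { assume k: "k < length b"
    have "length a + k < length (a @ b)" using k by simp
    hence "p (s + int (length a + k)) = (a @ b) ! (length a + k)" using h by blast
    thus "p (s + int (length a) + int k) = b ! k" by (simp add: add.assoc) }
next
  fix k assume h1: "\<forall>k<length a. p (s + int k) = a ! k" and h2: "\<forall>k<length b. p (s + int (length a) + int k) = b ! k"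
    and k: "k < length (a @ b)"
  show "p (s + int k) = (a @ b) ! k"
  proof (cases "k < length a")
    case True thus ?thesis using h1 by (simp add: nth_append)
  next
    case False
    hence "k - length a < length b" using k by simp
    hence "p (s + int (length a) + int (k - length a)) = b ! (k - length a)" using h2 by blast
    thus ?thesis using False by (simp add: nth_append of_nat_diff algebra_simps)
  qed
qed

lemma occurs_at_tr: "occurs_at w (tr c p) s \<longleftrightarrow> occurs_at w p (s + c)"
  unfolding occurs_at_iff by (simp add: tr_def algebra_simps)

lemma occurs_at_cong:
  "(\<And>k. k < length w \<Longrightarrow> p (s + int k) = q (s + int k)) \<Longrightarrow> occurs_at w p s \<longleftrightarrow> occurs_at w q s"
  unfolding occurs_at_iff by auto

lemma occurs_at_eq:
  "occurs_at w p s \<Longrightarrow> occurs_at w q s \<Longrightarrow> k < length w \<Longrightarrow> p (s + int k) = q (s + int k)"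
  unfolding occurs_at_iff by auto

lemma finite_bound:
  assumes "finite S" "\<forall>a\<in>S. \<exists>g::'b list. P a g"
  shows "\<exists>G. \<forall>a\<in>S. \<exists>g. P a g \<and> length g \<le> G"
proof -
  obtain f where f: "\<forall>a\<in>S. P a (f a)" using bchoice[OF assms(2)] by blast
  have "\<forall>a\<in>S. P a (f a) \<and> length (f a) \<le> Max ((\<lambda>a. length (f a)) ` S)"
    using f assms(1) by auto
  thus ?thesis by blast
qed

context sftx begin

definition lang :: "nat \<Rightarrow> 'a list set" where
  "lang L = {P \<in> language X. length P = L}"

lemma finite_lang: "finite (lang L)"
proof (rule finite_subset)
  show "lang L \<subseteq> {xs. set xs \<subseteq> UNIV \<and> length xs = L}" by (auto simp: lang_def)
  show "finite {xs. set xs \<subseteq> (UNIV::'a set) \<and> length xs = L}" by (rule finite_lists_length_eq) simp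
qed

lemma win_lang: "x \<in> X \<Longrightarrow> win x a n \<in> lang n"
  using langI by (simp add: lang_def)

lemma conn_left:
  assumes u: "u \<in> language X"
  shows "\<exists>G. \<forall>x\<in>X. \<forall>i. \<exists>y\<in>X. \<exists>g\<le>G. (\<forall>j<i. y j = x j) \<and> occurs_at u y (i + int g)"
proof -
  have "\<forall>a\<in>lang M. \<exists>g. a @ g @ u \<in> language X"
  proof
    fix a assume "a \<in> lang M" hence "a \<in> language X" by (simp add: lang_def)
    thus "\<exists>g. a @ g @ u \<in> language X" using trans_lang[OF _ u] by blast
  qed
  then obtain G where G: "\<forall>a\<in>lang M. \<exists>g. a @ g @ u \<in> language X \<and> length g \<le> G"
    using finite_bound[OF finite_lang, of M "\<lambda>a g. a @ g @ u \<in> language X"] by blast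
  have "\<forall>x\<in>X. \<forall>i. \<exists>y\<in>X. \<exists>g\<le>G. (\<forall>j<i. y j = x j) \<and> occurs_at u y (i + int g)"
  proof (intro ballI allI)
    fix x i assume xX: "x \<in> X"
    define \<alpha> where "\<alpha> = win x (i - int M) M"
    have "\<alpha> \<in> lang M" using win_lang xX by (simp add: \<alpha>_def)
    then obtain \<gamma> where \<gamma>: "\<alpha> @ \<gamma> @ u \<in> language X" "length \<gamma> \<le> G" using G by blast
    obtain p where p: "p \<in> X" "occurs_at (\<alpha> @ \<gamma> @ u) p 0" using langE[OF \<gamma>(1)] by blast
    define q where "q = tr (int M - i) p"
    have qX: "q \<in> X" using tr_X p(1) by (simp add: q_def)
    have la: "length \<alpha> = M" by (simp add: \<alpha>_def)
    have pa: "occurs_at \<alpha> p 0" "occurs_at u p (0 + int (length \<alpha>) + int (length \<gamma>))"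
      using p(2) unfolding occurs_at_append by simp_all
    have qa: "occurs_at \<alpha> q (i - int M)" using pa(1) by (simp add: q_def occurs_at_tr)
    have qu: "occurs_at u q (i + int (length \<gamma>))" using pa(2) by (simp add: q_def occurs_at_tr la algebra_simps)
    have xa: "occurs_at \<alpha> x (i - int M)" by (simp add: \<alpha>_def occurs_win)
    define y where "y = (\<lambda>j. if j < i - int M then x j else q j)"
    have eq: "\<And>j. i - int M \<le> j \<Longrightarrow> j < i - int M + int M \<Longrightarrow> x j = q j"
    proof -
      fix j assume j: "i - int M \<le> j" "j < i - int M + int M"
      define k where "k = nat (j - (i - int M))"
      have k: "k < length \<alpha>" "j = i - int M + int k" using j la unfolding k_def by linarith+
      show "x j = q j" using occurs_at_eq[OF xa qa k(1)] k(2) by simp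
    qed
    have yX: "y \<in> X" unfolding y_def by (rule glue[OF xX qX eq])
    have y1: "\<forall>j<i. y j = x j"
    proof (intro allI impI)
      fix j assume j: "j < i"
      show "y j = x j"
      proof (cases "j < i - int M")
        case True thus ?thesis by (simp add: y_def)
      next
        case False thus ?thesis using eq[of j] j by (simp add: y_def)
      qed
    qed
    have "occurs_at u y (i + int (length \<gamma>)) = occurs_at u q (i + int (length \<gamma>))"
      by (rule occurs_at_cong) (simp add: y_def)
    hence y2: "occurs_at u y (i + int (length \<gamma>))" using qu by simp
    show "\<exists>y\<in>X. \<exists>g\<le>G. (\<forall>j<i. y j = x j) \<and> occurs_at u y (i + int g)"
      using yX y1 y2 \<gamma>(2) by blast
  qed
  thus ?thesis by blast
qed

lemma conn_right:
  assumes u: "u \<in> language X" and lu: "M \<le> length u"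
  shows "\<exists>G. \<forall>z\<in>X. \<forall>x\<in>X. \<forall>p i. occurs_at u z p \<longrightarrow> (\<exists>y\<in>X. \<exists>g\<le>G.
     (\<forall>j < p + int (length u). y j = z j) \<and> (\<forall>j\<ge>0. y (p + int (length u) + int g + j) = x (i + j)))"
proof -
  have "\<forall>b\<in>lang M. \<exists>g. u @ g @ b \<in> language X"
  proof
    fix b assume "b \<in> lang M" hence "b \<in> language X" by (simp add: lang_def)
    thus "\<exists>g. u @ g @ b \<in> language X" using trans_lang[OF u] by blast
  qed
  then obtain G where G: "\<forall>b\<in>lang M. \<exists>g. u @ g @ b \<in> language X \<and> length g \<le> G"
    using finite_bound[OF finite_lang, of M "\<lambda>b g. u @ g @ b \<in> language X"] by blast
  have "\<forall>z\<in>X. \<forall>x\<in>X. \<forall>p i. occurs_at u z p \<longrightarrow> (\<exists>y\<in>X. \<exists>g\<le>G.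
     (\<forall>j < p + int (length u). y j = z j) \<and> (\<forall>j\<ge>0. y (p + int (length u) + int g + j) = x (i + j)))"
  proof (intro ballI allI impI)
    fix z x p i assume zX: "z \<in> X" and xX: "x \<in> X" and zu: "occurs_at u z p"
    define \<beta> where "\<beta> = win x i M"
    have "\<beta> \<in> lang M" using win_lang xX by (simp add: \<beta>_def)
    then obtain \<gamma> where \<gamma>: "u @ \<gamma> @ \<beta> \<in> language X" "length \<gamma> \<le> G" using G by blast
    obtain r where r: "r \<in> X" "occurs_at (u @ \<gamma> @ \<beta>) r 0" using langE[OF \<gamma>(1)] by blast
    define q where "q = tr (- p) r"
    have qX: "q \<in> X" using tr_X r(1) by (simp add: q_def)
    have lb: "length \<beta> = M" by (simp add: \<beta>_def)
    define s where "s = p + int (length u) + int (length \<gamma>)"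
    have ra: "occurs_at u r 0" "occurs_at \<beta> r (0 + int (length u) + int (length \<gamma>))"
      using r(2) unfolding occurs_at_append by simp_all
    have qu: "occurs_at u q p" using ra(1) by (simp add: q_def occurs_at_tr)
    have qb: "occurs_at \<beta> q s" using ra(2) by (simp add: q_def occurs_at_tr s_def algebra_simps)
    define y1 where "y1 = (\<lambda>j. if j < p then z j else q j)"
    have eq1: "\<And>j. p \<le> j \<Longrightarrow> j < p + int M \<Longrightarrow> z j = q j"
    proof -
      fix j assume j: "p \<le> j" "j < p + int M"
      define k where "k = nat (j - p)"
      have k: "k < length u" "j = p + int k" using j lu unfolding k_def by linarith+
      show "z j = q j" using occurs_at_eq[OF zu qu k(1)] k(2) by simp
    qed
    have y1X: "y1 \<in> X" unfolding y1_def by (rule glue[OF zX qX eq1])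
    define x' where "x' = tr (i - s) x"
    have x'X: "x' \<in> X" using tr_X xX by (simp add: x'_def)
    have x'b: "occurs_at \<beta> x' s" unfolding x'_def occurs_at_tr by (simp add: \<beta>_def occurs_win)
    define y where "y = (\<lambda>j. if j < s then y1 j else x' j)"
    have ps: "p \<le> s" by (simp add: s_def)
    have eq2: "\<And>j. s \<le> j \<Longrightarrow> j < s + int M \<Longrightarrow> y1 j = x' j"
    proof -
      fix j assume j: "s \<le> j" "j < s + int M"
      define k where "k = nat (j - s)"
      have k: "k < length \<beta>" "j = s + int k" using j lb unfolding k_def by linarith+
      have "q j = x' j" using occurs_at_eq[OF qb x'b k(1)] k(2) by simp
      thus "y1 j = x' j" using j ps by (simp add: y1_def)
    qed
    have yX: "y \<in> X" unfolding y_def by (rule glue[OF y1X x'X eq2])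
    have c1: "\<forall>j < p + int (length u). y j = z j"
    proof (intro allI impI)
      fix j assume j: "j < p + int (length u)"
      have js: "j < s" using j by (simp add: s_def)
      show "y j = z j"
      proof (cases "j < p")
        case True thus ?thesis using js by (simp add: y_def y1_def)
      next
        case False
        define k where "k = nat (j - p)"
        have k: "k < length u" "j = p + int k" using j False unfolding k_def by linarith+
        have "z j = q j" using occurs_at_eq[OF zu qu k(1)] k(2) by simp
        thus ?thesis using js False by (simp add: y_def y1_def)
      qed
    qed
    have c2: "\<forall>j\<ge>0. y (p + int (length u) + int (length \<gamma>) + j) = x (i + j)"
    proof (intro allI impI)
      fix j :: int assume "j \<ge> 0"
      hence "\<not> s + j < s" by simp
      hence "y (s + j) = x' (s + j)" by (simp add: y_def)
      also have "\<dots> = x (i + j)" by (simp add: x'_def tr_def add.commute)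
      finally show "y (p + int (length u) + int (length \<gamma>) + j) = x (i + j)" by (simp add: s_def)
    qed
    show "\<exists>y\<in>X. \<exists>g\<le>G. (\<forall>j < p + int (length u). y j = z j) \<and> (\<forall>j\<ge>0. y (p + int (length u) + int g + j) = x (i + j))"
      using yX c1 c2 \<gamma>(2) by blast
  qed
  thus ?thesis by blast
qed

lemma insertion:
  assumes u: "u \<in> language X" and lu: "M \<le> length u"
  shows "\<exists>G. \<forall>x\<in>X. \<forall>i. \<exists>y\<in>X. \<exists>g1\<le>G. \<exists>g2\<le>G. (\<forall>j<i. y j = x j) \<and> occurs_at u y (i + int g1) \<and>
     (\<forall>j\<ge>0. y (i + int g1 + int (length u) + int g2 + j) = x (i + j))"
proof -
  obtain G1 where G1: "\<forall>x\<in>X. \<forall>i. \<exists>y\<in>X. \<exists>g\<le>G1. (\<forall>j<i. y j = x j) \<and> occurs_at u y (i + int g)"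
    using conn_left[OF u] by blast
  obtain G2 where G2: "\<forall>z\<in>X. \<forall>x\<in>X. \<forall>p i. occurs_at u z p \<longrightarrow> (\<exists>y\<in>X. \<exists>g\<le>G2.
     (\<forall>j < p + int (length u). y j = z j) \<and> (\<forall>j\<ge>0. y (p + int (length u) + int g + j) = x (i + j)))"
    using conn_right[OF u lu] by blast
  have "\<forall>x\<in>X. \<forall>i. \<exists>y\<in>X. \<exists>g1\<le>max G1 G2. \<exists>g2\<le>max G1 G2. (\<forall>j<i. y j = x j) \<and> occurs_at u y (i + int g1) \<and>
     (\<forall>j\<ge>0. y (i + int g1 + int (length u) + int g2 + j) = x (i + j))"
  proof (intro ballI allI)
    fix x i assume xX: "x \<in> X"
    obtain y1 g1 where y1: "y1 \<in> X" "g1 \<le> G1" "\<forall>j<i. y1 j = x j" "occurs_at u y1 (i + int g1)"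
      using G1 xX by blast
    obtain y g2 where y: "y \<in> X" "g2 \<le> G2" "\<forall>j < i + int g1 + int (length u). y j = y1 j"
      "\<forall>j\<ge>0. y (i + int g1 + int (length u) + int g2 + j) = x (i + j)"
      using G2 y1(1) xX y1(4) by blast
    have a: "\<forall>j<i. y j = x j" using y(3) y1(3) by auto
    have b: "occurs_at u y (i + int g1)" using y1(4) by (subst occurs_at_cong[where q=y1]) (use y(3) in auto)
    show "\<exists>y\<in>X. \<exists>g1\<le>max G1 G2. \<exists>g2\<le>max G1 G2. (\<forall>j<i. y j = x j) \<and> occurs_at u y (i + int g1) \<and>
     (\<forall>j\<ge>0. y (i + int g1 + int (length u) + int g2 + j) = x (i + j))"
      using y(1) y1(2) y(2) a b y(4) by (meson max.coboundedI1 max.coboundedI2)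
  qed
  thus ?thesis by blast
qed

end

definition occ :: "'a list \<Rightarrow> 'a list \<Rightarrow> nat \<Rightarrow> bool" where
  "occ u P k \<longleftrightarrow> k + length u \<le> length P \<and> (\<forall>t<length u. P ! (k + t) = u ! t)"

definition factor :: "'a list \<Rightarrow> 'a list \<Rightarrow> bool" where
  "factor u P \<longleftrightarrow> (\<exists>k. occ u P k)"

context sftx begin

definition free :: "'a list \<Rightarrow> nat \<Rightarrow> 'a list set" where
  "free u L = {P \<in> lang L. \<not> factor u P}"

lemma finite_free: "finite (free u L)"
  using finite_lang by (rule finite_subset[rotated]) (auto simp: free_def)

lemma ins_count:
  assumes u: "u \<in> language X" and lu: "M \<le> length u"
  shows "\<exists>C D. \<forall>L. card (free u L) * (L + 1) \<le> C * card (lang (L + D))"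
proof -
  obtain G where G: "\<forall>x\<in>X. \<forall>i. \<exists>y\<in>X. \<exists>g1\<le>G. \<exists>g2\<le>G. (\<forall>j<i. y j = x j) \<and> occurs_at u y (i + int g1) \<and>
     (\<forall>j\<ge>0. y (i + int g1 + int (length u) + int g2 + j) = x (i + j))"
    using insertion[OF u lu] by blast
  define D where "D = length u + 2 * G"
  have "\<forall>L. card (free u L) * (L + 1) \<le> ((G+1) * (G+1) * (G + length u)) * card (lang (L + D))"
  proof
    fix L
    define S where "S = free u L \<times> {..L}"
    define xo where "xo = (\<lambda>P. SOME x. x \<in> X \<and> occurs_at P x 0)"
    have xo: "\<And>P. P \<in> language X \<Longrightarrow> xo P \<in> X \<and> occurs_at P (xo P) 0"
    proof -
      fix P assume "P \<in> language X"
      then obtain x where "x \<in> X" "occurs_at P x 0" using langE by blast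
      hence "\<exists>x. x \<in> X \<and> occurs_at P x 0" by blast
      from someI_ex[OF this] show "xo P \<in> X \<and> occurs_at P (xo P) 0" unfolding xo_def .
    qed
    define Prop where "Prop = (\<lambda>(Pi::'a list \<times> nat) (t::(int \<Rightarrow> 'a) \<times> nat \<times> nat).
        fst t \<in> X \<and> fst (snd t) \<le> G \<and> snd (snd t) \<le> G \<and>
        (\<forall>j<int (snd Pi). fst t j = xo (fst Pi) j) \<and> occurs_at u (fst t) (int (snd Pi) + int (fst (snd t))) \<and>
        (\<forall>j\<ge>0. fst t (int (snd Pi) + int (fst (snd t)) + int (length u) + int (snd (snd t)) + j) = xo (fst Pi) (int (snd Pi) + j)))"
    have "\<forall>Pi\<in>S. \<exists>t. Prop Pi t"
    proof
      fix Pi assume "Pi \<in> S"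
      hence "fst Pi \<in> language X" by (auto simp: S_def free_def lang_def)
      hence "xo (fst Pi) \<in> X" using xo by blast
      then obtain y g1 g2 where "y \<in> X" "g1 \<le> G" "g2 \<le> G" "\<forall>j<int (snd Pi). y j = xo (fst Pi) j"
        "occurs_at u y (int (snd Pi) + int g1)"
        "\<forall>j\<ge>0. y (int (snd Pi) + int g1 + int (length u) + int g2 + j) = xo (fst Pi) (int (snd Pi) + j)"
        using G by blast
      hence "Prop Pi (y, g1, g2)" unfolding Prop_def by simp
      thus "\<exists>t. Prop Pi t" by blast
    qed
    then obtain f where f: "\<forall>Pi\<in>S. Prop Pi (f Pi)" using bchoice by blast
    define Q where "Q = (\<lambda>Pi. win (fst (f Pi)) 0 (L + D))"
    define j0 where "j0 = (\<lambda>Q. LEAST k. occ u Q k)"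
    define \<Psi> where "\<Psi> = (\<lambda>Pi. (Q Pi, fst (snd (f Pi)), snd (snd (f Pi)), G + snd Pi - j0 (Q Pi)))"
    have props: "\<And>P i. (P, i) \<in> S \<Longrightarrow> Q (P, i) \<in> lang (L + D) \<and> fst (snd (f (P,i))) \<le> G \<and> snd (snd (f (P,i))) \<le> G \<and>
         j0 (Q (P, i)) \<le> i + G \<and> i < j0 (Q (P, i)) + length u \<and>
         (\<forall>k<i. Q (P,i) ! k = P ! k) \<and>
         (\<forall>k. i \<le> k \<longrightarrow> k < L \<longrightarrow> Q (P,i) ! (k + fst (snd (f (P,i))) + length u + snd (snd (f (P,i)))) = P ! k)"
    proof -
      fix P i assume Pi: "(P, i) \<in> S"
      define y where "y = fst (f (P, i))"
      define g1 where "g1 = fst (snd (f (P, i)))"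
      define g2 where "g2 = snd (snd (f (P, i)))"
      have iL: "i \<le> L" and PL: "P \<in> lang L" and Pf: "\<not> factor u P" using Pi by (auto simp: S_def free_def)
      have lP: "length P = L" using PL by (simp add: lang_def)
      have "P \<in> language X" using PL by (simp add: lang_def)
      hence xoP: "xo P \<in> X" "occurs_at P (xo P) 0" using xo by blast+
      have fP: "fst (f (P,i)) \<in> X \<and> fst (snd (f (P,i))) \<le> G \<and> snd (snd (f (P,i))) \<le> G \<and>
        (\<forall>j<int i. fst (f (P,i)) j = xo P j) \<and> occurs_at u (fst (f (P,i))) (int i + int (fst (snd (f (P,i))))) \<and>
        (\<forall>j\<ge>0. fst (f (P,i)) (int i + int (fst (snd (f (P,i)))) + int (length u) + int (snd (snd (f (P,i)))) + j) = xo P (int i + j))"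
        using bspec[OF f Pi] unfolding Prop_def by simp
      have fy: "y \<in> X" "g1 \<le> G" "g2 \<le> G" "\<forall>j<int i. y j = xo P j" "occurs_at u y (int i + int g1)"
        "\<forall>j\<ge>0. y (int i + int g1 + int (length u) + int g2 + j) = xo P (int i + j)"
        using fP unfolding y_def g1_def g2_def by blast+
      have QL: "Q (P, i) \<in> lang (L + D)" using win_lang fy(1) by (simp add: Q_def y_def)
      have Qn: "\<And>k. k < L + D \<Longrightarrow> Q (P, i) ! k = y (int k)" by (simp add: Q_def y_def)
      have occ1: "occ u (Q (P, i)) (i + g1)"
        unfolding occ_def
      proof
        show "i + g1 + length u \<le> length (Q (P, i))" using iL fy(2) by (simp add: Q_def D_def)
        show "\<forall>t<length u. Q (P, i) ! (i + g1 + t) = u ! t"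
        proof (intro allI impI)
          fix t assume t: "t < length u"
          have "i + g1 + t < L + D" using iL fy(2) t by (simp add: D_def)
          hence "Q (P, i) ! (i + g1 + t) = y (int i + int g1 + int t)" using Qn by simp
          thus "Q (P, i) ! (i + g1 + t) = u ! t" using fy(5) t unfolding occurs_at_iff by simp
        qed
      qed
      have jle: "j0 (Q (P, i)) \<le> i + g1" unfolding j0_def using occ1 by (rule Least_le)
      have jocc: "occ u (Q (P, i)) (j0 (Q (P, i)))" unfolding j0_def using occ1 by (rule LeastI)
      have pre: "\<forall>k<i. Q (P,i) ! k = P ! k"
      proof (intro allI impI)
        fix k assume k: "k < i"
        have "Q (P, i) ! k = y (int k)" using Qn k iL by (simp add: D_def)
        also have "\<dots> = xo P (0 + int k)" using fy(4) k by simp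
        also have "\<dots> = P ! k" using xoP(2) k iL lP unfolding occurs_at_iff by simp
        finally show "Q (P,i) ! k = P ! k" .
      qed
      have gt: "i < j0 (Q (P, i)) + length u"
      proof (rule ccontr)
        assume "\<not> i < j0 (Q (P, i)) + length u"
        hence le: "j0 (Q (P, i)) + length u \<le> i" by simp
        have "occ u P (j0 (Q (P, i)))"
          unfolding occ_def
        proof
          show "j0 (Q (P, i)) + length u \<le> length P" using le iL lP by simp
          show "\<forall>t<length u. P ! (j0 (Q (P, i)) + t) = u ! t"
            using jocc pre le unfolding occ_def by (metis add_less_cancel_left order_less_le_trans)
        qed
        thus False using Pf unfolding factor_def by blast
      qed
      have post: "\<forall>k. i \<le> k \<longrightarrow> k < L \<longrightarrow> Q (P,i) ! (k + g1 + length u + g2) = P ! k"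
      proof (intro allI impI)
        fix k assume k: "i \<le> k" "k < L"
        have "k + g1 + length u + g2 < L + D" using k fy(2,3) by (simp add: D_def)
        hence "Q (P,i) ! (k + g1 + length u + g2) = y (int k + int g1 + int (length u) + int g2)"
          using Qn by simp
        also have "\<dots> = y (int i + int g1 + int (length u) + int g2 + (int k - int i))" by (simp add: algebra_simps)
        also have "\<dots> = xo P (int i + (int k - int i))" by (rule fy(6)[rule_format]) (use k in simp)
        also have "\<dots> = P ! k" using xoP(2) k lP unfolding occurs_at_iff by simp
        finally show "Q (P,i) ! (k + g1 + length u + g2) = P ! k" .
      qed
      show "Q (P, i) \<in> lang (L + D) \<and> fst (snd (f (P,i))) \<le> G \<and> snd (snd (f (P,i))) \<le> G \<and>
         j0 (Q (P, i)) \<le> i + G \<and> i < j0 (Q (P, i)) + length u \<and>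
         (\<forall>k<i. Q (P,i) ! k = P ! k) \<and>
         (\<forall>k. i \<le> k \<longrightarrow> k < L \<longrightarrow> Q (P,i) ! (k + fst (snd (f (P,i))) + length u + snd (snd (f (P,i)))) = P ! k)"
      proof (intro conjI)
        show "j0 (Q (P, i)) \<le> i + G" using jle fy(2) by simp
      qed (use QL fy(2,3) gt pre post in \<open>simp_all add: g1_def g2_def\<close>)
    qed
    have inj: "inj_on \<Psi> S"
    proof (rule inj_onI)
      fix A B assume A: "A \<in> S" and B: "B \<in> S" and e: "\<Psi> A = \<Psi> B"
      obtain P i where Ai: "A = (P, i)" by force
      obtain P' i' where Bi: "B = (P', i')" by force
      have pA: "Q (P, i) \<in> lang (L + D) \<and> fst (snd (f (P,i))) \<le> G \<and> snd (snd (f (P,i))) \<le> G \<and>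
         j0 (Q (P, i)) \<le> i + G \<and> i < j0 (Q (P, i)) + length u \<and>
         (\<forall>k<i. Q (P,i) ! k = P ! k) \<and>
         (\<forall>k. i \<le> k \<longrightarrow> k < L \<longrightarrow> Q (P,i) ! (k + fst (snd (f (P,i))) + length u + snd (snd (f (P,i)))) = P ! k)"
        using props A Ai by blast
      have pB: "Q (P', i') \<in> lang (L + D) \<and> fst (snd (f (P',i'))) \<le> G \<and> snd (snd (f (P',i'))) \<le> G \<and>
         j0 (Q (P', i')) \<le> i' + G \<and> i' < j0 (Q (P', i')) + length u \<and>
         (\<forall>k<i'. Q (P',i') ! k = P' ! k) \<and>
         (\<forall>k. i' \<le> k \<longrightarrow> k < L \<longrightarrow> Q (P',i') ! (k + fst (snd (f (P',i'))) + length u + snd (snd (f (P',i')))) = P' ! k)"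
        using props B Bi by blast
      have eQ: "Q (P, i) = Q (P', i')" and eg1: "fst (snd (f (P,i))) = fst (snd (f (P',i')))"
        and eg2: "snd (snd (f (P,i))) = snd (snd (f (P',i')))"
        and et: "G + i - j0 (Q (P, i)) = G + i' - j0 (Q (P', i'))"
        using e unfolding \<Psi>_def Ai Bi by auto
      have a1: "j0 (Q (P, i)) \<le> i + G" using pA by blast
      have a2: "j0 (Q (P', i')) \<le> i' + G" using pB by blast
      have ii: "i = i'" using et eQ a1 a2 by simp
      have lP: "length P = L" "length P' = L" using A B Ai Bi by (auto simp: S_def free_def lang_def)
      have "P = P'"
      proof (rule nth_equalityI)
        show "length P = length P'" using lP by simp
        fix k assume k: "k < length P"
        show "P ! k = P' ! k"
        proof (cases "k < i")
          case True
          have "P ! k = Q (P, i) ! k" using pA True by simp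
          also have "\<dots> = Q (P', i') ! k" using eQ by simp
          also have "\<dots> = P' ! k" using pB True ii by simp
          finally show ?thesis .
        next
          case False
          hence ik: "i \<le> k" "k < L" using k lP by auto
          have "P ! k = Q (P, i) ! (k + fst (snd (f (P,i))) + length u + snd (snd (f (P,i))))"
            using pA ik by simp
          also have "\<dots> = Q (P', i') ! (k + fst (snd (f (P',i'))) + length u + snd (snd (f (P',i'))))"
            using eQ eg1 eg2 by simp
          also have "\<dots> = P' ! k" using pB ik ii by simp
          finally show ?thesis .
        qed
      qed
      thus "A = B" using Ai Bi ii by simp
    qed
    have img: "\<Psi> ` S \<subseteq> lang (L + D) \<times> {..G} \<times> {..G} \<times> {..<G + length u}"
    proof
      fix z assume "z \<in> \<Psi> ` S"
      then obtain P i where Pi: "(P, i) \<in> S" "z = \<Psi> (P, i)" by force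
      have p: "Q (P, i) \<in> lang (L + D) \<and> fst (snd (f (P,i))) \<le> G \<and> snd (snd (f (P,i))) \<le> G \<and>
         j0 (Q (P, i)) \<le> i + G \<and> i < j0 (Q (P, i)) + length u"
        using props[OF Pi(1)] by blast
      have "G + i - j0 (Q (P, i)) < G + length u" using p by linarith
      thus "z \<in> lang (L + D) \<times> {..G} \<times> {..G} \<times> {..<G + length u}" using p Pi(2) by (simp add: \<Psi>_def)
    qed
    have fin: "finite (lang (L + D) \<times> {..G} \<times> {..G} \<times> {..<G + length u})"
      using finite_lang by simp
    have "card S \<le> card (lang (L + D) \<times> {..G} \<times> {..G} \<times> {..<G + length u})"
      by (rule card_inj_on_le[OF inj img fin])
    also have "\<dots> = card (lang (L + D)) * ((G+1) * ((G+1) * (G + length u)))"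
      by (simp add: card_cartesian_product)
    finally have "card S \<le> card (lang (L + D)) * ((G+1) * ((G+1) * (G + length u)))" .
    moreover have "card S = card (free u L) * (L + 1)"
      by (simp add: S_def card_cartesian_product)
    ultimately show "card (free u L) * (L + 1) \<le> ((G+1) * (G+1) * (G + length u)) * card (lang (L + D))"
      by (simp add: algebra_simps)
  qed
  thus ?thesis by blast
qed

lemma lang_split_bound: "card (lang (L + E)) \<le> card (lang L) * CARD('a) ^ E"
proof -
  have inj: "inj_on (\<lambda>P. (take L P, drop L P)) (lang (L + E))"
    by (rule inj_onI) (metis append_take_drop_id prod.inject)
  have img: "(\<lambda>P. (take L P, drop L P)) ` lang (L + E) \<subseteq> lang L \<times> {xs. set xs \<subseteq> UNIV \<and> length xs = E}"
  proof
    fix z assume "z \<in> (\<lambda>P. (take L P, drop L P)) ` lang (L + E)"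
    then obtain P where P: "P \<in> lang (L + E)" "z = (take L P, drop L P)" by blast
    obtain x i where xi: "x \<in> X" "occurs_at P x i" using P(1) unfolding lang_def language_def by blast
    have "take L P = win x i L" using xi(2) P(1) unfolding occurs_at_win lang_def by (simp add: win_def take_map)
    hence "take L P \<in> lang L" using win_lang xi(1) by simp
    thus "z \<in> lang L \<times> {xs. set xs \<subseteq> UNIV \<and> length xs = E}" using P by (simp add: lang_def)
  qed
  have fin: "finite (lang L \<times> {xs. set xs \<subseteq> (UNIV::'a set) \<and> length xs = E})"
    using finite_lang finite_lists_length_eq[of "UNIV::'a set" E] by simp
  have "card (lang (L + E)) \<le> card (lang L \<times> {xs. set xs \<subseteq> (UNIV::'a set) \<and> length xs = E})"
    by (rule card_inj_on_le[OF inj img fin])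
  also have "\<dots> = card (lang L) * CARD('a) ^ E"
    using card_lists_length_eq[of "UNIV::'a set" E] by (simp add: card_cartesian_product)
  finally show ?thesis .
qed

end

definition repl :: "(int \<Rightarrow> 'a) \<Rightarrow> int \<Rightarrow> 'a list \<Rightarrow> (int \<Rightarrow> 'a)" where
  "repl x a v = (\<lambda>j. if a \<le> j \<and> j < a + int (length v) then v ! nat (j - a) else x j)"

lemma lex_total:
  assumes tot: "\<And>a b. a \<noteq> b \<Longrightarrow> (a, b) \<in> r \<or> (b, a) \<in> r"
  shows "length xs = length ys \<Longrightarrow> xs \<noteq> ys \<Longrightarrow> (xs, ys) \<in> lex r \<or> (ys, xs) \<in> lex r"
proof (induction xs arbitrary: ys)
  case Nil thus ?case by simp
next
  case (Cons a xs)
  then obtain b ys' where ys: "ys = b # ys'" by (cases ys) auto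
  show ?case
  proof (cases "a = b")
    case True
    hence "xs \<noteq> ys'" "length xs = length ys'" using Cons.prems ys by auto
    thus ?thesis using Cons.IH True ys by auto
  next
    case False thus ?thesis using tot[OF False] Cons.prems ys by auto
  qed
qed

lemma split_occ:
  assumes "occ v P k"
  shows "P = take k P @ v @ drop (k + length v) P"
proof (rule nth_equalityI)
  have kv: "k + length v \<le> length P" and e: "\<forall>t<length v. P ! (k + t) = v ! t" using assms by (auto simp: occ_def)
  show "length P = length (take k P @ v @ drop (k + length v) P)" using kv by simp
  fix j assume j: "j < length P"
  show "P ! j = (take k P @ v @ drop (k + length v) P) ! j"
  proof (cases "j < k")
    case True thus ?thesis using kv by (simp add: nth_append)
  next
    case False
    note jk0 = False
    show ?thesis
    proof (cases "j < k + length v")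
      case True
      hence jk: "j - k < length v" using False by simp
      hence "P ! (k + (j - k)) = v ! (j - k)" using e by blast
      moreover have "k + (j - k) = j" using False by simp
      ultimately have "P ! j = v ! (j - k)" by simp
      thus ?thesis using False True kv jk by (simp add: nth_append min_def)
    next
      case False
      hence "\<not> (j - k < length v)" by simp
      thus ?thesis using False jk0 kv j by (simp add: nth_append min_def)
    qed
  qed
qed

context sftx begin

lemma moore_core:
  fixes Gm :: "(int \<Rightarrow> 'a) \<Rightarrow> (int \<Rightarrow> 'a)" and r :: nat and rr :: "('a \<times> 'a) set"
  assumes surj: "X \<subseteq> Gm ` X"
    and Gtr: "\<And>x c. x \<in> X \<Longrightarrow> Gm (tr c x) = tr c (Gm x)"
    and Gloc: "\<And>x y i. x \<in> X \<Longrightarrow> y \<in> X \<Longrightarrow> (\<forall>j. \<bar>j - i\<bar> \<le> int r \<longrightarrow> x j = y j) \<Longrightarrow> Gm x i = Gm y i"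
    and vin: "v \<in> language X" and lv: "M \<le> length v" and lv': "length v' = length v"
    and wfr: "wf rr" and lexv: "(v', v) \<in> lex rr"
    and exch: "\<And>x a. x \<in> X \<Longrightarrow> occurs_at v x a \<Longrightarrow> repl x a v' \<in> X \<and> Gm (repl x a v') = Gm x"
  shows False
proof -
  define im where "im = (\<lambda>P T. length P = length T + 2 * r \<and> (\<exists>x\<in>X. occurs_at P x 0 \<and> occurs_at T (Gm x) (int r)))"
  have im_unique: "\<And>P T T'. im P T \<Longrightarrow> im P T' \<Longrightarrow> T = T'"
  proof -
    fix P T T' assume a: "im P T" "im P T'"
    obtain x where x: "x \<in> X" "occurs_at P x 0" "occurs_at T (Gm x) (int r)" and l: "length P = length T + 2 * r"
      using a(1) unfolding im_def by blast
    obtain x' where x': "x' \<in> X" "occurs_at P x' 0" "occurs_at T' (Gm x') (int r)" and l': "length P = length T' + 2 * r"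
      using a(2) unfolding im_def by blast
    show "T = T'"
    proof (rule nth_equalityI)
      show "length T = length T'" using l l' by simp
      fix t assume t: "t < length T"
      have "Gm x (int r + int t) = Gm x' (int r + int t)"
      proof (rule Gloc[OF x(1) x'(1)], intro allI impI)
        fix j assume j: "\<bar>j - (int r + int t)\<bar> \<le> int r"
        define k where "k = nat j"
        have k: "j = 0 + int k" "k < length P" using j t l unfolding k_def by linarith+
        show "x j = x' j" using occurs_at_eq[OF x(2) x'(2) k(2)] k(1) by simp
      qed
      moreover have "Gm x (int r + int t) = T ! t" using x(3) t unfolding occurs_at_iff by simp
      moreover have "Gm x' (int r + int t) = T' ! t" using x'(3) t l l' unfolding occurs_at_iff by simp
      ultimately show "T ! t = T' ! t" by simp
    qed
  qed
  have surj_im: "\<And>T L. T \<in> lang L \<Longrightarrow> \<exists>P\<in>lang (L + 2 * r). im P T"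
  proof -
    fix T L assume T: "T \<in> lang L"
    obtain y where y: "y \<in> X" "occurs_at T y 0" using T langE unfolding lang_def by blast
    obtain x where x: "x \<in> X" "y = Gm x" using surj y(1) by blast
    define x' where "x' = tr (- int r) x"
    have x'X: "x' \<in> X" using tr_X x(1) by (simp add: x'_def)
    have "Gm x' = tr (- int r) y" using Gtr[OF x(1)] x(2) by (simp add: x'_def)
    hence "occurs_at T (Gm x') (int r)" using y(2) by (simp add: occurs_at_tr)
    moreover have "occurs_at (win x' 0 (L + 2 * r)) x' 0" by (rule occurs_win)
    ultimately have "im (win x' 0 (L + 2 * r)) T" using x'X T unfolding im_def lang_def by auto
    thus "\<exists>P\<in>lang (L + 2 * r). im P T" using win_lang[OF x'X] by blast
  qed
  have norm0: "\<And>n T P0. P0 \<in> lang n \<longrightarrow> im P0 T \<longrightarrow> (\<exists>P'. P' \<in> free v n \<and> im P' T)"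
  proof -
    fix n T P0
    show "P0 \<in> lang n \<longrightarrow> im P0 T \<longrightarrow> (\<exists>P'. P' \<in> free v n \<and> im P' T)"
    proof (rule wf_induct[OF wf_lex[OF wfr], of "\<lambda>P. P \<in> lang n \<longrightarrow> im P T \<longrightarrow> (\<exists>P'. P' \<in> free v n \<and> im P' T)" P0], intro impI)
      fix P assume IH0: "\<forall>y. (y, P) \<in> lex rr \<longrightarrow> y \<in> lang n \<longrightarrow> im y T \<longrightarrow> (\<exists>P'. P' \<in> free v n \<and> im P' T)"
        and Pn: "P \<in> lang n" and imP: "im P T"
      have IH: "\<And>P'. (P', P) \<in> lex rr \<Longrightarrow> P' \<in> lang n \<Longrightarrow> im P' T \<Longrightarrow> (\<exists>P''. P'' \<in> free v n \<and> im P'' T)"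
        using IH0 by blast
      show "\<exists>P'. P' \<in> free v n \<and> im P' T"
      proof (cases "factor v P")
        case False thus ?thesis using Pn imP by (auto simp: free_def)
      next
        case True
        then obtain k where k: "occ v P k" unfolding factor_def by blast
        have kv: "k + length v \<le> length P" and ek: "\<forall>t<length v. P ! (k + t) = v ! t" using k by (auto simp: occ_def)
        obtain x where x: "x \<in> X" "occurs_at P x 0" "occurs_at T (Gm x) (int r)" and lP: "length P = length T + 2 * r"
          using imP unfolding im_def by blast
        have xv: "occurs_at v x (int k)"
          unfolding occurs_at_iff
        proof (intro allI impI)
          fix t assume t: "t < length v"
          have kt: "k + t < length P" using t kv by simp
          have "x (0 + int (k + t)) = P ! (k + t)" using x(2) kt unfolding occurs_at_iff by blast
          hence "x (int k + int t) = P ! (k + t)" by simp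
          thus "x (int k + int t) = v ! t" using ek t by simp
        qed
        define x' where "x' = repl x (int k) v'"
        have x': "x' \<in> X" "Gm x' = Gm x" using exch[OF x(1) xv] by (auto simp: x'_def)
        define P' where "P' = win x' 0 n"
        have P'n: "P' \<in> lang n" using win_lang[OF x'(1)] by (simp add: P'_def)
        have ln: "length P = n" using Pn by (simp add: lang_def)
        have o1: "occurs_at P' x' 0" by (simp add: P'_def occurs_win)
        have o2: "occurs_at T (Gm x') (int r)" using x'(2) x(3) by simp
        have l1: "length P' = length T + 2 * r" using lP ln by (simp add: P'_def)
        have imP': "im P' T" unfolding im_def using l1 o1 o2 x'(1) by blast
        have P'eq: "P' = take k P @ v' @ drop (k + length v) P"
        proof (rule nth_equalityI)
          show "length P' = length (take k P @ v' @ drop (k + length v) P)" using kv ln lv' by (simp add: P'_def)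
          fix j assume j: "j < length P'"
          hence jn: "j < n" by (simp add: P'_def)
          have xj: "x (int j) = P ! j" using x(2) jn ln unfolding occurs_at_iff by simp
          show "P' ! j = (take k P @ v' @ drop (k + length v) P) ! j"
          proof (cases "j < k")
            case True thus ?thesis using jn kv xj by (simp add: P'_def x'_def repl_def nth_append)
          next
            case False
            note jk0 = False
            show ?thesis
            proof (cases "j < k + length v")
              case True
              have "nat (int j - int k) = j - k" using jk0 by simp
              moreover have "j - k < length v" using jk0 True by simp
              ultimately show ?thesis using jk0 True jn kv lv' by (simp add: P'_def x'_def repl_def nth_append min_def)
            next
              case False
              hence "\<not> (j - k < length v)" by simp
              moreover have "\<not> length P \<le> k" using kv lv M_ge2 by simp
              ultimately show ?thesis using False jk0 jn kv lv' xj by (simp add: P'_def x'_def repl_def nth_append min_def)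
            qed
          qed
        qed
        have Peq: "P = take k P @ v @ drop (k + length v) P" by (rule split_occ[OF k])
        have "(v' @ drop (k + length v) P, v @ drop (k + length v) P) \<in> lex rr"
          using lex_append_rightI[OF lexv] by simp
        hence "(take k P @ v' @ drop (k + length v) P, take k P @ v @ drop (k + length v) P) \<in> lex rr"
          by (rule lex_append_leftI)
        hence "(P', P) \<in> lex rr" using P'eq Peq by simp
        thus ?thesis using IH P'n imP' by blast
      qed
    qed
  qed
  obtain C D where CD: "\<And>L. card (free v L) * (L + 1) \<le> C * card (lang (L + D))"
    using ins_count[OF vin lv] by blast
  obtain x0 where x0: "x0 \<in> X" using vin langE by blast
  define K0 where "K0 = CARD('a) ^ (2 * r + D)"
  define L where "L = C * K0"
  have c1: "card (lang L) \<ge> 1"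
  proof -
    have "win x0 0 L \<in> lang L" using win_lang[OF x0] .
    hence "lang L \<noteq> {}" by blast
    hence "card (lang L) > 0" using finite_lang[of L] by (simp add: card_gt_0_iff)
    thus ?thesis by simp
  qed
  have inj_part: "card (lang L) \<le> card (free v (L + 2 * r))"
  proof -
    define h where "h = (\<lambda>T. SOME P'. P' \<in> free v (L + 2 * r) \<and> im P' T)"
    have hT: "\<And>T. T \<in> lang L \<Longrightarrow> h T \<in> free v (L + 2 * r) \<and> im (h T) T"
    proof -
      fix T assume T: "T \<in> lang L"
      obtain P where P: "P \<in> lang (L + 2 * r)" "im P T" using surj_im[OF T] by blast
      have "\<exists>P'. P' \<in> free v (L + 2 * r) \<and> im P' T" using norm0 P by blast
      from someI_ex[OF this] show "h T \<in> free v (L + 2 * r) \<and> im (h T) T" unfolding h_def .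
    qed
    have "inj_on h (lang L)"
    proof (rule inj_onI)
      fix T T' assume a: "T \<in> lang L" "T' \<in> lang L" "h T = h T'"
      have "im (h T) T" "im (h T') T'" using hT a(1,2) by blast+
      thus "T = T'" using a(3) im_unique by simp
    qed
    moreover have "h ` lang L \<subseteq> free v (L + 2 * r)" using hT by blast
    ultimately show ?thesis using card_inj_on_le finite_free by blast
  qed
  have "card (lang L) * (L + 2 * r + 1) \<le> card (free v (L + 2 * r)) * (L + 2 * r + 1)"
    using inj_part by (rule mult_right_mono) simp
  also have "\<dots> \<le> C * card (lang (L + 2 * r + D))" using CD by blast
  also have "\<dots> \<le> C * (card (lang L) * K0)"
    using lang_split_bound[of L "2 * r + D"] by (simp add: K0_def add.assoc)
  also have "\<dots> = card (lang L) * L" by (simp add: L_def)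
  finally have "card (lang L) * (L + 2 * r + 1) \<le> card (lang L) * L" .
  moreover have "card (lang L) * L < card (lang L) * (L + 2 * r + 1)"
    by (rule mult_strict_left_mono) (use c1 in simp_all)
  ultimately show False by linarith
qed

lemma moore:
  fixes Gm :: "(int \<Rightarrow> 'a) \<Rightarrow> (int \<Rightarrow> 'a)" and r :: nat
  assumes surj: "X \<subseteq> Gm ` X"
    and Gtr: "\<And>x c. x \<in> X \<Longrightarrow> Gm (tr c x) = tr c (Gm x)"
    and Gloc: "\<And>x y i. x \<in> X \<Longrightarrow> y \<in> X \<Longrightarrow> (\<forall>j. \<bar>j - i\<bar> \<le> int r \<longrightarrow> x j = y j) \<Longrightarrow> Gm x i = Gm y i"
    and uin: "u \<in> language X" and lu: "M \<le> length u" and lu': "length u' = length u" and ne: "u \<noteq> u'"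
    and exch1: "\<And>x a. x \<in> X \<Longrightarrow> occurs_at u x a \<Longrightarrow> repl x a u' \<in> X \<and> Gm (repl x a u') = Gm x"
    and exch2: "\<And>x a. x \<in> X \<Longrightarrow> occurs_at u' x a \<Longrightarrow> repl x a u \<in> X \<and> Gm (repl x a u) = Gm x"
  shows False
proof -
  define code where "code = (to_nat :: 'a \<Rightarrow> nat)"
  have inj: "inj code" unfolding code_def by (rule inj_to_nat)
  define rr where "rr = Wellfounded.measure code"
  have wfr: "wf rr" by (simp add: rr_def)
  have tot: "\<And>a b. a \<noteq> b \<Longrightarrow> (a, b) \<in> rr \<or> (b, a) \<in> rr"
  proof -
    fix a b :: 'a assume "a \<noteq> b"
    hence "code a \<noteq> code b" using inj by (auto simp: inj_def)
    thus "(a, b) \<in> rr \<or> (b, a) \<in> rr" by (auto simp: rr_def)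
  qed
  have "(u, u') \<in> lex rr \<or> (u', u) \<in> lex rr" using lex_total[OF tot lu'[symmetric] ne] .
  thus False
  proof
    assume "(u', u) \<in> lex rr"
    from moore_core[OF surj Gtr Gloc uin lu lu' wfr this exch1] show False .
  next
    assume l: "(u, u') \<in> lex rr"
    obtain x where x: "x \<in> X" "occurs_at u x 0" using uin langE by blast
    have rX: "repl x 0 u' \<in> X" using exch1[OF x] by blast
    have "occurs_at u' (repl x 0 u') 0" unfolding occurs_at_iff
    proof (intro allI impI)
      fix k assume "k < length u'"
      thus "repl x 0 u' (0 + int k) = u' ! k" by (simp add: repl_def)
    qed
    hence u'in: "u' \<in> language X" using rX unfolding language_def by blast
    show False by (rule moore_core[OF surj Gtr Gloc u'in _ _ wfr l exch2]) (use lu lu' in simp_all)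
  qed
qed

end

context eqca begin

lemma onto_n: "F ` X = X \<Longrightarrow> X \<subseteq> (F ^^ n) ` X"
proof (induction n)
  case 0 thus ?case by simp
next
  case (Suc n)
  show ?case
  proof
    fix y assume y: "y \<in> X"
    obtain x where x: "x \<in> X" "y = (F ^^ n) x" using Suc y by blast
    obtain z where z: "z \<in> X" "x = F z" using Suc.prems x(1) by blast
    have "(F ^^ Suc n) z = (F ^^ n) (F z)" by (simp only: funpow_Suc_right comp_apply)
    hence "(F ^^ Suc n) z = y" using x z by simp
    thus "y \<in> (F ^^ Suc n) ` X" using z(1) by blast
  qed
qed

lemma wall_tr: "wall m x (c + d) \<Longrightarrow> wall m (tr d x) c"
  unfolding wall_def by (simp add: tr_def algebra_simps)

lemma exch_seg:
  assumes blk: "Blk m R" and rR: "rho \<le> R" and Rm: "R \<le> m" and mM: "M \<le> 2 * m + 1"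
    and aX: "a \<in> X" and bX: "b \<in> X" and c12: "c1 \<le> c2"
    and wa: "wall m a c1" "wall m a c2" and wb: "wall m b c1" "wall m b c2"
    and eqT: "\<And>i. c1 - int R \<le> i \<Longrightarrow> i \<le> c2 + int R \<Longrightarrow> (F ^^ T) a i = (F ^^ T) b i"
    and xX: "x \<in> X" and occ: "occurs_at (win a (c1 - int m) (nat (c2 - c1 + 2 * int m + 1))) x s"
  shows "repl x s (win b (c1 - int m) (nat (c2 - c1 + 2 * int m + 1))) \<in> X \<and>
         (F ^^ T) (repl x s (win b (c1 - int m) (nat (c2 - c1 + 2 * int m + 1)))) = (F ^^ T) x"
proof -
  define len where "len = nat (c2 - c1 + 2 * int m + 1)"
  define d where "d = s - (c1 - int m)"
  define a' where "a' = tr (- d) a"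
  define b' where "b' = tr (- d) b"
  have a'X: "a' \<in> X" and b'X: "b' \<in> X" using tr_X aX bX by (auto simp: a'_def b'_def)
  have lenv: "int len = c2 - c1 + 2 * int m + 1" using c12 by (simp add: len_def)
  have xa: "\<And>j. s \<le> j \<Longrightarrow> j < s + int len \<Longrightarrow> x j = a' j"
  proof -
    fix j assume j: "s \<le> j" "j < s + int len"
    define k where "k = nat (j - s)"
    have k: "k < len" "j = s + int k" using j unfolding k_def by linarith+
    have "x (s + int k) = win a (c1 - int m) len ! k" using occ k(1) unfolding occurs_at_iff len_def by simp
    also have "\<dots> = a (c1 - int m + int k)" using k(1) by simp
    finally show "x j = a' j" using k(2) by (simp add: a'_def tr_def d_def algebra_simps)
  qed
  define x' where "x' = repl x s (win b (c1 - int m) len)"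
  have x'in: "\<And>j. s \<le> j \<Longrightarrow> j < s + int len \<Longrightarrow> x' j = b' j"
  proof -
    fix j assume j: "s \<le> j" "j < s + int len"
    define k where "k = nat (j - s)"
    have k: "k < len" "j = s + int k" using j unfolding k_def by linarith+
    have "x' j = win b (c1 - int m) len ! k" using j k by (simp add: x'_def repl_def)
    also have "\<dots> = b (c1 - int m + int k)" using k(1) by simp
    finally show "x' j = b' j" using k(2) by (simp add: b'_def tr_def d_def algebra_simps)
  qed
  have x'out: "\<And>j. \<not> (s \<le> j \<and> j < s + int len) \<Longrightarrow> x' j = x j"
    by (auto simp: x'_def repl_def)
  have wa': "wall m a' (c1 + d)" "wall m a' (c2 + d)" using wa by (auto simp: a'_def intro!: wall_tr)
  have wb': "wall m b' (c1 + d)" "wall m b' (c2 + d)" using wb by (auto simp: b'_def intro!: wall_tr)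
  have sdef: "s = c1 + d - int m" by (simp add: d_def)
  have ab_wall: "\<And>j. (\<bar>j - (c1 + d)\<bar> \<le> int m \<or> \<bar>j - (c2 + d)\<bar> \<le> int m) \<Longrightarrow> a' j = b' j"
  proof -
    fix j assume "\<bar>j - (c1 + d)\<bar> \<le> int m \<or> \<bar>j - (c2 + d)\<bar> \<le> int m"
    thus "a' j = b' j"
    proof
      assume h: "\<bar>j - (c1 + d)\<bar> \<le> int m"
      have "a' (c1 + d + (j - (c1 + d))) = e (j - (c1 + d))" using wa'(1) h unfolding wall_def by blast
      moreover have "b' (c1 + d + (j - (c1 + d))) = e (j - (c1 + d))" using wb'(1) h unfolding wall_def by blast
      ultimately show ?thesis by simp
    next
      assume h: "\<bar>j - (c2 + d)\<bar> \<le> int m"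
      have "a' (c2 + d + (j - (c2 + d))) = e (j - (c2 + d))" using wa'(2) h unfolding wall_def by blast
      moreover have "b' (c2 + d + (j - (c2 + d))) = e (j - (c2 + d))" using wb'(2) h unfolding wall_def by blast
      ultimately show ?thesis by simp
    qed
  qed
    define y1 where "y1 = (\<lambda>j. if j < s then x j else b' j)"
  have y1X: "y1 \<in> X" unfolding y1_def
  proof (rule glue[OF xX b'X])
    fix j assume j: "s \<le> j" "j < s + int M"
    have "j < s + int len" using j mM lenv c12 by linarith
    hence "x j = a' j" using xa j by blast
    also have "\<dots> = b' j" using j mM sdef by (intro ab_wall) auto
    finally show "x j = b' j" .
  qed
  define y2 where "y2 = (\<lambda>j. if j < c2 + d - int m then y1 j else x j)"
  have y2X: "y2 \<in> X" unfolding y2_def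
  proof (rule glue[OF y1X xX])
    fix j assume j: "c2 + d - int m \<le> j" "j < c2 + d - int m + int M"
    have js: "s \<le> j" "j < s + int len" using j mM lenv sdef c12 by linarith+
    have "y1 j = b' j" using js by (simp add: y1_def)
    also have "\<dots> = a' j" using j mM by (intro ab_wall[symmetric]) auto
    also have "\<dots> = x j" using xa js by simp
    finally show "y1 j = x j" .
  qed
  have x'y2: "x' = y2"
  proof
    fix j show "x' j = y2 j"
    proof (cases "s \<le> j \<and> j < s + int len")
      case True
      hence xb: "x' j = b' j" using x'in by blast
      show ?thesis
      proof (cases "j < c2 + d - int m")
        case True2: True
        thus ?thesis using xb True by (simp add: y2_def y1_def)
      next
        case False
        have "j \<le> c2 + d + int m" using True lenv sdef by linarith
        hence "b' j = a' j" using False by (intro ab_wall[symmetric]) auto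
        thus ?thesis using xb False xa True by (simp add: y2_def)
      qed
    next
      case False
      hence "x' j = x j" using x'out by blast
      moreover have "y2 j = x j"
      proof (cases "j < s")
        case True
        have "j < c2 + d - int m" using True sdef c12 by linarith
        thus ?thesis using True by (simp add: y2_def y1_def)
      next
        case False2: False
        hence "\<not> j < c2 + d - int m" using False lenv sdef by linarith
        thus ?thesis by (simp add: y2_def)
      qed
      ultimately show ?thesis by simp
    qed
  qed
  have x'X: "x' \<in> X" using y2X x'y2 by simp
    have wx: "wall m x (c1 + d)" "wall m x (c2 + d)"
  proof -
    show "wall m x (c1 + d)" unfolding wall_def
    proof (intro allI impI)
      fix j assume j: "\<bar>j\<bar> \<le> int m"
      have "x (c1 + d + j) = a' (c1 + d + j)" using j lenv sdef c12 by (intro xa) linarith+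
      thus "x (c1 + d + j) = e j" using wa'(1) j unfolding wall_def by simp
    qed
    show "wall m x (c2 + d)" unfolding wall_def
    proof (intro allI impI)
      fix j assume j: "\<bar>j\<bar> \<le> int m"
      have "x (c2 + d + j) = a' (c2 + d + j)" using j lenv sdef c12 by (intro xa) linarith+
      thus "x (c2 + d + j) = e j" using wa'(2) j unfolding wall_def by simp
    qed
  qed
  have wx': "wall m x' (c1 + d)" "wall m x' (c2 + d)"
  proof -
    show "wall m x' (c1 + d)" unfolding wall_def
    proof (intro allI impI)
      fix j assume j: "\<bar>j\<bar> \<le> int m"
      have "x' (c1 + d + j) = b' (c1 + d + j)" using j lenv sdef c12 by (intro x'in) linarith+
      thus "x' (c1 + d + j) = e j" using wb'(1) j unfolding wall_def by simp
    qed
    show "wall m x' (c2 + d)" unfolding wall_def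
    proof (intro allI impI)
      fix j assume j: "\<bar>j\<bar> \<le> int m"
      have "x' (c2 + d + j) = b' (c2 + d + j)" using j lenv sdef c12 by (intro x'in) linarith+
      thus "x' (c2 + d + j) = e j" using wb'(2) j unfolding wall_def by simp
    qed
  qed
  have agL: "\<And>j. j \<le> c1 + d + int m \<Longrightarrow> x j = x' j"
  proof -
    fix j assume j: "j \<le> c1 + d + int m"
    show "x j = x' j"
    proof (cases "s \<le> j \<and> j < s + int len")
      case True
      have "x j = a' j" using xa True by blast
      also have "\<dots> = b' j" using j True sdef by (intro ab_wall) auto
      also have "\<dots> = x' j" using x'in True by simp
      finally show ?thesis .
    next
      case False thus ?thesis using x'out by simp
    qed
  qed
  have agR: "\<And>j. c2 + d - int m \<le> j \<Longrightarrow> x j = x' j"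
  proof -
    fix j assume j: "c2 + d - int m \<le> j"
    show "x j = x' j"
    proof (cases "s \<le> j \<and> j < s + int len")
      case True
      have "x j = a' j" using xa True by blast
      also have "\<dots> = b' j" using j True sdef lenv by (intro ab_wall) auto
      also have "\<dots> = x' j" using x'in True by simp
      finally show ?thesis .
    next
      case False thus ?thesis using x'out by simp
    qed
  qed
  have FT: "(F ^^ T) x' = (F ^^ T) x"
  proof
    fix i
    consider (L) "i \<le> c1 + d + int R" | (Rr) "c2 + d - int R \<le> i" | (Mid) "c1 + d + int R < i" "i < c2 + d - int R"
      by linarith
    thus "(F ^^ T) x' i = (F ^^ T) x i"
    proof cases
      case L
      show ?thesis by (rule shieldL[OF x'X xX blk rR Rm wx'(1) wx(1) _ L]) (use agL in simp)
    next
      case Rr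
      show ?thesis by (rule shieldR[OF x'X xX blk rR Rm wx'(2) wx(2) _ Rr]) (use agR in simp)
    next
      case Mid
      have cc: "c1 + d \<le> c2 + d" using c12 by simp
      have i1: "c1 + d - int R \<le> i" "i \<le> c2 + d + int R" using Mid by linarith+
      have "(F ^^ T) x i = (F ^^ T) a' i"
      proof (rule shield2[OF xX a'X blk rR Rm cc wx wa' _ i1])
        fix j assume "c1 + d - int m \<le> j" "j \<le> c2 + d + int m"
        thus "x j = a' j" using lenv sdef by (intro xa) linarith+
      qed
      moreover have "(F ^^ T) x' i = (F ^^ T) b' i"
      proof (rule shield2[OF x'X b'X blk rR Rm cc wx' wb' _ i1])
        fix j assume "c1 + d - int m \<le> j" "j \<le> c2 + d + int m"
        thus "x' j = b' j" using lenv sdef by (intro x'in) linarith+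
      qed
      moreover have "(F ^^ T) a' i = (F ^^ T) a (i - d)"
      proof -
        have "(F ^^ T) a' = tr (- d) ((F ^^ T) a)" unfolding a'_def by (rule Fn_tr[OF aX])
        thus ?thesis by (simp add: tr_def)
      qed
      moreover have "(F ^^ T) b' i = (F ^^ T) b (i - d)"
      proof -
        have "(F ^^ T) b' = tr (- d) ((F ^^ T) b)" unfolding b'_def by (rule Fn_tr[OF bX])
        thus ?thesis by (simp add: tr_def)
      qed
      moreover have "(F ^^ T) a (i - d) = (F ^^ T) b (i - d)" using i1 by (intro eqT) linarith+
      ultimately show ?thesis by simp
    qed
  qed
  show ?thesis using x'X FT by (simp add: x'_def len_def)
qed

lemma seg_inj:
  assumes onto: "F ` X = X" and blk: "Blk m R" and rR: "rho \<le> R" and Rm: "R \<le> m" and mM: "M \<le> 2 * m + 1"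
    and aX: "a \<in> X" and bX: "b \<in> X" and c12: "c1 \<le> c2"
    and wa: "wall m a c1" "wall m a c2" and wb: "wall m b c1" "wall m b c2"
    and eqT: "\<And>i. c1 - int R \<le> i \<Longrightarrow> i \<le> c2 + int R \<Longrightarrow> (F ^^ T) a i = (F ^^ T) b i"
    and i: "c1 - int m \<le> i" "i \<le> c2 + int m"
  shows "a i = b i"
proof (rule ccontr)
  assume ne: "a i \<noteq> b i"
  define len where "len = nat (c2 - c1 + 2 * int m + 1)"
  define u where "u = win a (c1 - int m) len"
  define u' where "u' = win b (c1 - int m) len"
  have lenv: "int len = c2 - c1 + 2 * int m + 1" using c12 by (simp add: len_def)
  define k where "k = nat (i - (c1 - int m))"
  have k: "k < len" "i = c1 - int m + int k" using i lenv unfolding k_def by linarith+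
  have "u ! k \<noteq> u' ! k" using ne k by (simp add: u_def u'_def)
  hence uu: "u \<noteq> u'" by blast
  show False
  proof (rule moore[of "F ^^ T" "T * rho" u u'])
    show "X \<subseteq> (F ^^ T) ` X" by (rule onto_n[OF onto])
    show "\<And>x c. x \<in> X \<Longrightarrow> (F ^^ T) (tr c x) = tr c ((F ^^ T) x)" by (rule Fn_tr)
    show "\<And>x y i. x \<in> X \<Longrightarrow> y \<in> X \<Longrightarrow> (\<forall>j. \<bar>j - i\<bar> \<le> int (T * rho) \<longrightarrow> x j = y j) \<Longrightarrow> (F ^^ T) x i = (F ^^ T) y i"
      using loc_Fn[of T] unfolding loc_def by blast
    show "u \<in> language X" unfolding u_def by (rule langI[OF aX])
    show "M \<le> length u" using mM lenv c12 by (simp add: u_def)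
    show "length u' = length u" by (simp add: u_def u'_def)
    show "u \<noteq> u'" by (rule uu)
    show "\<And>x s. x \<in> X \<Longrightarrow> occurs_at u x s \<Longrightarrow> repl x s u' \<in> X \<and> (F ^^ T) (repl x s u') = (F ^^ T) x"
      unfolding u_def u'_def len_def by (rule exch_seg[OF blk rR Rm mM aX bX c12 wa wb eqT])
    show "\<And>x s. x \<in> X \<Longrightarrow> occurs_at u' x s \<Longrightarrow> repl x s u \<in> X \<and> (F ^^ T) (repl x s u) = (F ^^ T) x"
      unfolding u_def u'_def len_def by (rule exch_seg[OF blk rR Rm mM bX aX c12 wb wa eqT[symmetric]])
  qed
qed

end

lemma periodic_after:
  assumes fin: "finite S" and cl: "\<forall>z\<in>S. f z \<in> S" and zS: "z \<in> S"
  shows "\<exists>Q\<ge>1. (f ^^ Q) ((f ^^ card S) z) = (f ^^ card S) z"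
proof -
  have inS: "\<And>k. (f ^^ k) z \<in> S" by (induct_tac k) (use zS cl in auto)
  have "\<not> inj_on (\<lambda>k. (f ^^ k) z) {..card S}"
  proof
    assume inj: "inj_on (\<lambda>k. (f ^^ k) z) {..card S}"
    have "card {..card S} \<le> card S" using card_inj_on_le[OF inj _ fin] inS by blast
    thus False by simp
  qed
  then obtain i j where ij: "i \<le> card S" "j \<le> card S" "i \<noteq> j" "(f ^^ i) z = (f ^^ j) z"
    unfolding inj_on_def by auto
  obtain a b where ab: "a < b" "b \<le> card S" "(f ^^ a) z = (f ^^ b) z"
  proof (cases "i < j")
    case True thus ?thesis using that ij by blast
  next
    case False thus ?thesis using that[of j i] ij by auto
  qed
  define N where "N = card S"
  have "(f ^^ (b - a)) ((f ^^ N) z) = (f ^^ ((N - a) + b)) z"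
  proof -
    have "(f ^^ (b - a)) ((f ^^ N) z) = (f ^^ ((b - a) + N)) z" by (simp add: funpow_add)
    moreover have "(b - a) + N = (N - a) + b" using ab by (simp add: N_def)
    ultimately show ?thesis by simp
  qed
  also have "\<dots> = (f ^^ (N - a)) ((f ^^ b) z)" by (simp add: funpow_add)
  also have "\<dots> = (f ^^ (N - a)) ((f ^^ a) z)" using ab by simp
  also have "\<dots> = (f ^^ ((N - a) + a)) z" by (simp only: funpow_add comp_apply)
  also have "(N - a) + a = N" using ab by (simp add: N_def)
  finally show ?thesis using ab by (intro exI[of _ "b - a"]) (simp add: N_def)
qed

context sftx begin

lemma periodize:
  assumes yX: "y \<in> X" and w0: "occurs_at W y 0" and wK: "occurs_at W y (int K)"
    and MW: "M \<le> length W" and WK: "length W \<le> K"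
  shows "(\<lambda>j. y (j mod int K)) \<in> X"
proof (rule local_adm)
  fix i
  define t where "t = i mod int K"
  have K0: "K > 0" using MW WK M_ge2 by simp
  have t: "0 \<le> t" "t < int K" using K0 by (auto simp: t_def)
  have "\<forall>k<M. tr (t - i) y (i + int k) = y ((i + int k) mod int K)"
  proof (intro allI impI)
    fix k assume k: "k < M"
    have modeq: "(i + int k) mod int K = (t + int k) mod int K" by (simp add: t_def mod_add_left_eq)
    show "tr (t - i) y (i + int k) = y ((i + int k) mod int K)"
    proof (cases "t + int k < int K")
      case True
      hence "(t + int k) mod int K = t + int k" using t by simp
      thus ?thesis using modeq by (simp add: tr_def add.commute)
    next
      case False
      have lt: "t + int k < 2 * int K" using t k MW WK by linarith
      have m1: "(t + int k) mod int K = t + int k - int K"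
      proof -
        have "(t + int k) mod int K = (t + int k - int K) mod int K" by (metis mod_add_self2 diff_add_cancel)
        also have "\<dots> = t + int k - int K" using False lt by (intro mod_pos_pos_trivial) linarith+
        finally show ?thesis .
      qed
      define q where "q = nat (t + int k - int K)"
      have q: "q < length W" "t + int k - int K = int q" using False lt k MW t unfolding q_def by linarith+
      have "y (0 + int q) = W ! q" using w0 q(1) unfolding occurs_at_iff by blast
      moreover have "y (int K + int q) = W ! q" using wK q(1) unfolding occurs_at_iff by blast
      ultimately have "y (int q) = y (int K + int q)" by simp
      thus ?thesis using modeq m1 q(2) by (simp add: tr_def algebra_simps)
    qed
  qed
  thus "\<exists>x\<in>X. \<forall>k<M. x (i + int k) = y ((i + int k) mod int K)" using tr_X[OF yX] by blast
qed

end

lemma periodic_mod: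
  assumes per: "\<And>j. z (j + int c) = z j" and c: "c > 0"
  shows "z j = z (j mod int c)"
proof -
  define r where "r = j mod int c"
  have aux: "\<And>q. z (r + int c * q) = z r"
  proof -
    fix q :: int
    show "z (r + int c * q) = z r"
    proof (induction q rule: int_induct[where k=0])
      case base thus ?case by simp
    next
      case (step1 i)
      have "z (r + int c * (i + 1)) = z ((r + int c * i) + int c)" by (simp add: algebra_simps)
      also have "\<dots> = z (r + int c * i)" by (rule per)
      finally show ?case using step1 by simp
    next
      case (step2 i)
      have "z (r + int c * i) = z ((r + int c * (i - 1)) + int c)" by (simp add: algebra_simps)
      also have "\<dots> = z (r + int c * (i - 1))" by (rule per)
      finally show ?case using step2 by simp
    qed
  qed
  have "j = r + int c * (j div int c)" by (simp add: r_def)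
  hence "z j = z (r + int c * (j div int c))" by simp
  also have "\<dots> = z r" by (rule aux)
  finally show ?thesis by (simp add: r_def)
qed

context eqca begin

lemma exists_periodic_wall:
  assumes onto: "F ` X = X" and blk: "Blk m R" and rR: "rho \<le> R" and Rm: "R \<le> m" and mM: "M \<le> 2 * m + 1"
  shows "\<exists>p\<in>X. \<exists>Q\<ge>1. (F ^^ Q) p = p \<and> (\<exists>c. wall m p c)"
proof (rule ccontr)
  assume nop: "\<not> ?thesis"
  define W where "W = win e (- int m) (2 * m + 1)"
  have WL: "W \<in> language X" unfolding W_def by (rule langI[OF eX])
  have lW: "length W = 2 * m + 1" by (simp add: W_def)
  have MW: "M \<le> length W" using mM lW by simp
  obtain G where G: "\<forall>x\<in>X. \<forall>i. \<exists>y\<in>X. \<exists>g1\<le>G. \<exists>g2\<le>G. (\<forall>j<i. y j = x j) \<and> occurs_at W y (i + int g1) \<and>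
     (\<forall>j\<ge>0. y (i + int g1 + int (length W) + int g2 + j) = x (i + j))"
    using insertion[OF WL MW] by blast
  obtain C1 D1 where CD: "\<And>n. card (free W n) * (n + 1) \<le> C1 * card (lang (n + D1))"
    using ins_count[OF WL MW] by blast
  define E where "E = 2 * G + (2 * m + 1) + 2 * R + 1 + D1"
  define L where "L = (G+1) * (G+1) * C1 * CARD('a) ^ E"
  define Lw where "Lw = L + 2 * G + (2 * m + 1) + 2 * R + 1"
  define Kmax where "Kmax = L + 2 * G + (2 * m + 1)"
  define Pn :: nat where "Pn = fact Kmax"
  have Pn0: "Pn > 0" by (simp add: Pn_def)
  define S where "S = {z \<in> X. tr (int Pn) z = z}"
  have Smod: "\<And>z j. z \<in> S \<Longrightarrow> z j = z (j mod int Pn)"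
  proof -
    fix z j assume "z \<in> S"
    hence zt: "tr (int Pn) z = z" unfolding S_def by blast
    have "\<And>j. z (j + int Pn) = z j"
    proof -
      fix j have "tr (int Pn) z j = z j" using zt by simp
      thus "z (j + int Pn) = z j" by (simp add: tr_def)
    qed
    thus "z j = z (j mod int Pn)" using periodic_mod Pn0 by blast
  qed
  have finS: "finite S"
  proof (rule inj_on_finite[of "\<lambda>z. win z 0 Pn" S "lang Pn"])
    show "inj_on (\<lambda>z. win z 0 Pn) S"
    proof (rule inj_onI)
      fix z z' assume zS: "z \<in> S" "z' \<in> S" and eq: "win z 0 Pn = win z' 0 Pn"
      show "z = z'"
      proof
        fix j
        define k where "k = nat (j mod int Pn)"
        have k: "k < Pn" "int k = j mod int Pn" using Pn0 unfolding k_def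
          by (simp_all add: nat_less_iff)
        have "win z 0 Pn ! k = win z' 0 Pn ! k" using eq by simp
        hence "z (int k) = z' (int k)" using k(1) by simp
        thus "z j = z' j" using Smod[OF zS(1), of j] Smod[OF zS(2), of j] k(2) by simp
      qed
    qed
    show "(\<lambda>z. win z 0 Pn) ` S \<subseteq> lang Pn" using win_lang unfolding S_def by blast
    show "finite (lang Pn)" by (rule finite_lang)
  qed
  have clS: "\<forall>z\<in>S. F z \<in> S"
  proof
    fix z assume "z \<in> S"
    hence zX: "z \<in> X" and zt: "tr (int Pn) z = z" unfolding S_def by auto
    have "tr (int Pn) (F z) = F z" using F_tr[OF zX, of "int Pn"] zt by simp
    thus "F z \<in> S" unfolding S_def using FX[OF zX] by blast
  qed
  define T where "T = card S"
    define good where "good = (\<lambda>P (t::nat \<times> nat \<times> (int \<Rightarrow> 'a)). fst t \<le> G \<and> fst (snd t) \<le> G \<and>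
      snd (snd t) \<in> S \<and> wall m (snd (snd t)) (int m) \<and>
      wall m (snd (snd t)) (int m + int (2 * m + 1 + fst (snd t) + L + fst t)) \<and>
      (\<forall>k<L. snd (snd t) (int (2 * m + 1 + fst (snd t) + k)) = P ! k))"
  have constr: "\<forall>P\<in>lang L. \<exists>t. good P t"
  proof
    fix P assume PL: "P \<in> lang L"
    obtain x0 where x0: "x0 \<in> X" "occurs_at P x0 0" using PL langE unfolding lang_def by blast
    have lP: "length P = L" using PL by (simp add: lang_def)
    obtain y1 g1 g2 where y1: "y1 \<in> X" "g1 \<le> G" "g2 \<le> G" "\<forall>j<int L. y1 j = x0 j" "occurs_at W y1 (int L + int g1)"
      using G x0(1) by blast
    obtain y2 g3 g4 where y2: "y2 \<in> X" "g3 \<le> G" "g4 \<le> G" "occurs_at W y2 (0 + int g3)"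
      "\<forall>j\<ge>0. y2 (0 + int g3 + int (length W) + int g4 + j) = y1 (0 + j)"
      using G y1(1) by blast
    define y3 where "y3 = tr (int g3) y2"
    have y3X: "y3 \<in> X" using tr_X y2(1) by (simp add: y3_def)
    have y3W0: "occurs_at W y3 0" using y2(4) by (simp add: y3_def occurs_at_tr)
    have y3s: "\<And>j. j \<ge> 0 \<Longrightarrow> y3 (int (2 * m + 1) + int g4 + j) = y1 j"
      using y2(5) lW by (simp add: y3_def tr_def algebra_simps)
    define K where "K = 2 * m + 1 + g4 + L + g1"
    have y3WK: "occurs_at W y3 (int K)"
      unfolding occurs_at_iff
    proof (intro allI impI)
      fix k assume k: "k < length W"
      have "y3 (int K + int k) = y3 (int (2 * m + 1) + int g4 + (int L + int g1 + int k))"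
        by (simp add: K_def algebra_simps)
      also have "\<dots> = y1 (int L + int g1 + int k)" by (rule y3s) simp
      also have "\<dots> = W ! k" using y1(5) k unfolding occurs_at_iff by blast
      finally show "y3 (int K + int k) = W ! k" .
    qed
    have WK: "length W \<le> K" using lW by (simp add: K_def)
    have K0: "K > 0" using lW by (simp add: K_def)
    define z where "z = (\<lambda>j. y3 (j mod int K))"
    have zX: "z \<in> X" unfolding z_def by (rule periodize[OF y3X y3W0 y3WK MW WK])
    have KPn: "K dvd Pn" unfolding Pn_def by (rule dvd_fact) (use K0 y1(2) y2(3) in \<open>auto simp: K_def Kmax_def\<close>)
    then obtain q where q: "Pn = K * q" by blast
    have zS: "z \<in> S" unfolding S_def
    proof (simp add: zX, rule ext)
      fix j
      have "(j + int Pn) mod int K = j mod int K" using q by (simp add: mod_add_right_eq)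
      thus "tr (int Pn) z j = z j" by (simp add: tr_def z_def)
    qed
    have zlow: "\<And>j. 0 \<le> j \<Longrightarrow> j < int K \<Longrightarrow> z j = y3 j" by (simp add: z_def)
    have zper: "\<And>j. z (j + int K) = z j" by (simp add: z_def)
    have w1: "wall m z (int m)" unfolding wall_def
    proof (intro allI impI)
      fix j assume j: "\<bar>j\<bar> \<le> int m"
      define k where "k = nat (int m + j)"
      have k: "k < length W" "int m + j = 0 + int k" using j lW unfolding k_def by linarith+
      have "z (int m + j) = y3 (int m + j)" using j by (intro zlow) (auto simp: K_def)
      also have "\<dots> = W ! k" using y3W0 k unfolding occurs_at_iff by simp
      also have "\<dots> = e (- int m + int k)" using k(1) lW by (simp add: W_def)
      also have "- int m + int k = j" using k(2) by simp
      finally show "z (int m + j) = e j" .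
    qed
    have w2: "wall m z (int m + int K)" unfolding wall_def
    proof (intro allI impI)
      fix j assume j: "\<bar>j\<bar> \<le> int m"
      have "z (int m + int K + j) = z ((int m + j) + int K)" by (simp add: algebra_simps)
      also have "\<dots> = z (int m + j)" by (rule zper)
      also have "\<dots> = e j" using w1 j unfolding wall_def by blast
      finally show "z (int m + int K + j) = e j" .
    qed
    have zP: "\<forall>k<L. z (int (2 * m + 1 + g4 + k)) = P ! k"
    proof (intro allI impI)
      fix k assume k: "k < L"
      have "z (int (2 * m + 1 + g4 + k)) = y3 (int (2 * m + 1) + int g4 + int k)"
        using k by (simp add: z_def K_def algebra_simps)
      also have "\<dots> = y1 (int k)" by (rule y3s) simp
      also have "\<dots> = x0 (0 + int k)" using y1(4) k by simp
      also have "\<dots> = P ! k" using x0(2) k lP unfolding occurs_at_iff by simp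
      finally show "z (int (2 * m + 1 + g4 + k)) = P ! k" .
    qed
    have "good P (g1, g4, z)" unfolding good_def using y1(2) y2(3) zS w1 w2 zP by (simp add: K_def)
    thus "\<exists>t. good P t" by blast
  qed
  then obtain h where h: "\<forall>P\<in>lang L. good P (h P)" using bchoice by blast
  define \<Phi> where "\<Phi> = (\<lambda>P. (fst (h P), fst (snd (h P)), win ((F ^^ T) (snd (snd (h P)))) (int m - int R) Lw))"
  have nofac: "\<And>P. P \<in> lang L \<Longrightarrow> \<not> factor W (win ((F ^^ T) (snd (snd (h P)))) (int m - int R) Lw)"
  proof
    fix P assume PL: "P \<in> lang L" and fa: "factor W (win ((F ^^ T) (snd (snd (h P)))) (int m - int R) Lw)"
    define z where "z = snd (snd (h P))"
    have zS: "z \<in> S" using h PL unfolding good_def z_def by blast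
    define y where "y = (F ^^ T) z"
    have yX: "y \<in> X" using zS Fn_X unfolding S_def y_def by blast
    obtain Q where Q: "Q \<ge> 1" "(F ^^ Q) y = y" using periodic_after[OF finS clS zS] unfolding y_def T_def by blast
    obtain k where k: "occ W (win y (int m - int R) Lw) k" using fa unfolding factor_def y_def z_def by blast
    have "wall m y (int m - int R + int k + int m)" unfolding wall_def
    proof (intro allI impI)
      fix j assume j: "\<bar>j\<bar> \<le> int m"
      define t where "t = nat (j + int m)"
      have t: "t < length W" "j + int m = int t" using j lW unfolding t_def by linarith+
      have kt: "k + t < Lw" using k t(1) unfolding occ_def by simp
      have "win y (int m - int R) Lw ! (k + t) = W ! t" using k t(1) unfolding occ_def by blast
      hence yW: "y (int m - int R + int (k + t)) = W ! t" using kt by simp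
      have pos: "int m - int R + int k + int m + j = int m - int R + int (k + t)" using t(2) by simp
      have ej: "- int m + int t = j" using t(2) by simp
      have "y (int m - int R + int k + int m + j) = y (int m - int R + int (k + t))" by (simp only: pos)
      also have "\<dots> = W ! t" by (rule yW)
      also have "\<dots> = e (- int m + int t)" using t(1) lW by (simp add: W_def)
      also have "\<dots> = e j" by (simp only: ej)
      finally show "y (int m - int R + int k + int m + j) = e j" .
    qed
    thus False using nop yX Q by blast
  qed
  have img: "\<Phi> ` lang L \<subseteq> {..G} \<times> {..G} \<times> free W Lw"
  proof
    fix v assume "v \<in> \<Phi> ` lang L"
    then obtain P where P: "P \<in> lang L" "v = \<Phi> P" by blast
    have p: "good P (h P)" using h P(1) by blast
    have "(F ^^ T) (snd (snd (h P))) \<in> X" using p Fn_X unfolding good_def S_def by blast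
    hence "win ((F ^^ T) (snd (snd (h P)))) (int m - int R) Lw \<in> lang Lw" by (rule win_lang)
    thus "v \<in> {..G} \<times> {..G} \<times> free W Lw" using p nofac[OF P(1)] P(2)
      unfolding good_def \<Phi>_def free_def by auto
  qed
  have inj: "inj_on \<Phi> (lang L)"
  proof (rule inj_onI)
    fix P P' assume PL: "P \<in> lang L" and P'L: "P' \<in> lang L" and eq: "\<Phi> P = \<Phi> P'"
    define g1 where "g1 = fst (h P)"
    define g4 where "g4 = fst (snd (h P))"
    define z where "z = snd (snd (h P))"
    define z' where "z' = snd (snd (h P'))"
    have e1: "fst (h P') = g1" and e4: "fst (snd (h P')) = g4"
      and ew: "win ((F ^^ T) z) (int m - int R) Lw = win ((F ^^ T) z') (int m - int R) Lw"
      using eq unfolding \<Phi>_def g1_def g4_def z_def z'_def by auto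
    have p: "good P (h P)" using h PL by blast
    have p': "good P' (h P')" using h P'L by blast
    define K where "K = 2 * m + 1 + g4 + L + g1"
    have zX: "z \<in> X" and z'X: "z' \<in> X" using p p' unfolding good_def S_def z_def z'_def by auto
    have g: "g1 \<le> G" "g4 \<le> G" using p unfolding good_def g1_def g4_def by auto
    have wz: "wall m z (int m)" "wall m z (int m + int K)"
      using p unfolding good_def z_def K_def g1_def g4_def by auto
    have wz': "wall m z' (int m)" "wall m z' (int m + int K)"
      using p' e1 e4 unfolding good_def z'_def K_def by auto
    have zP: "\<forall>k<L. z (int (2 * m + 1 + g4 + k)) = P ! k" using p unfolding good_def z_def g4_def by auto
    have zP': "\<forall>k<L. z' (int (2 * m + 1 + g4 + k)) = P' ! k" using p' e4 unfolding good_def z'_def by auto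
    have eqT: "\<And>i. int m - int R \<le> i \<Longrightarrow> i \<le> int m + int K + int R \<Longrightarrow> (F ^^ T) z i = (F ^^ T) z' i"
    proof -
      fix i assume i: "int m - int R \<le> i" "i \<le> int m + int K + int R"
      define k where "k = nat (i - (int m - int R))"
      have k: "k < Lw" "i = int m - int R + int k" using i g unfolding k_def K_def Lw_def by linarith+
      have "win ((F ^^ T) z) (int m - int R) Lw ! k = win ((F ^^ T) z') (int m - int R) Lw ! k" using ew by simp
      thus "(F ^^ T) z i = (F ^^ T) z' i" using k by simp
    qed
    have cc: "int m \<le> int m + int K" by simp
    show "P = P'"
    proof (rule nth_equalityI)
      show "length P = length P'" using PL P'L by (simp add: lang_def)
      fix k assume k: "k < length P"
      hence kL: "k < L" using PL by (simp add: lang_def)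
      have "z (int (2 * m + 1 + g4 + k)) = z' (int (2 * m + 1 + g4 + k))"
        by (rule seg_inj[OF onto blk rR Rm mM zX z'X cc wz wz' eqT]) (use kL in \<open>simp_all add: K_def\<close>)
      thus "P ! k = P' ! k" using zP zP' kL by simp
    qed
  qed
  have fin3: "finite ({..G} \<times> {..G} \<times> free W Lw)" using finite_free by simp
  have c1: "card (lang L) \<le> (G+1) * (G+1) * card (free W Lw)"
  proof -
    have "card (lang L) \<le> card ({..G} \<times> {..G} \<times> free W Lw)" by (rule card_inj_on_le[OF inj img fin3])
    also have "\<dots> = (G+1) * ((G+1) * card (free W Lw))" by (simp only: card_cartesian_product card_atMost Suc_eq_plus1)
    finally show ?thesis by (simp only: mult.assoc)
  qed
  obtain x0 where x0: "x0 \<in> X" using eX by blast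
  have cpos: "card (lang L) \<ge> 1"
  proof -
    have "win x0 0 L \<in> lang L" using win_lang[OF x0] .
    hence "lang L \<noteq> {}" by blast
    hence "card (lang L) > 0" using finite_lang[of L] by (simp add: card_gt_0_iff)
    thus ?thesis by simp
  qed
  have "card (lang L) * (Lw + 1) \<le> (G+1) * (G+1) * card (free W Lw) * (Lw + 1)"
    using c1 by (rule mult_right_mono) simp
  also have "\<dots> = (G+1) * (G+1) * (card (free W Lw) * (Lw + 1))" by (simp add: algebra_simps)
  also have "\<dots> \<le> (G+1) * (G+1) * (C1 * card (lang (Lw + D1)))" using CD by (intro mult_left_mono) auto
  also have "Lw + D1 = L + E" by (simp add: Lw_def E_def)
  also have "(G+1) * (G+1) * (C1 * card (lang (L + E))) \<le> (G+1) * (G+1) * (C1 * (card (lang L) * CARD('a) ^ E))"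
    using lang_split_bound[of L E] by (intro mult_left_mono) auto
  also have "\<dots> = card (lang L) * L" by (simp add: L_def algebra_simps)
  finally have "card (lang L) * (Lw + 1) \<le> card (lang L) * L" .
  moreover have "card (lang L) * L < card (lang L) * (Lw + 1)"
    by (rule mult_strict_left_mono) (use cpos in \<open>simp_all add: Lw_def\<close>)
  ultimately show False by linarith
qed

end

context sftx begin

lemma periodic_with_walls:
  assumes WL: "W \<in> language X" and MW: "M \<le> length W" and PL: "P \<in> language X"
  shows "\<exists>z\<in>X. \<exists>K off. length W \<le> K \<and> (\<forall>j. z (j + int K) = z j) \<and> occurs_at W z 0 \<and> occurs_at P z (int off)"
proof -
  obtain G where G: "\<forall>x\<in>X. \<forall>i. \<exists>y\<in>X. \<exists>g1\<le>G. \<exists>g2\<le>G. (\<forall>j<i. y j = x j) \<and> occurs_at W y (i + int g1) \<and>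
     (\<forall>j\<ge>0. y (i + int g1 + int (length W) + int g2 + j) = x (i + j))"
    using insertion[OF WL MW] by blast
  define L where "L = length P"
  obtain x0 where x0: "x0 \<in> X" "occurs_at P x0 0" using PL langE by blast
  obtain y1 g1 g2 where y1: "y1 \<in> X" "\<forall>j<int L. y1 j = x0 j" "occurs_at W y1 (int L + int g1)"
    using G x0(1) by blast
  obtain y2 g3 g4 where y2: "y2 \<in> X" "occurs_at W y2 (0 + int g3)"
    "\<forall>j\<ge>0. y2 (0 + int g3 + int (length W) + int g4 + j) = y1 (0 + j)"
    using G y1(1) by blast
  define y3 where "y3 = tr (int g3) y2"
  have y3X: "y3 \<in> X" using tr_X y2(1) by (simp add: y3_def)
  have y3W0: "occurs_at W y3 0" using y2(2) by (simp add: y3_def occurs_at_tr)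
  have y3s: "\<And>j. j \<ge> 0 \<Longrightarrow> y3 (int (length W) + int g4 + j) = y1 j"
    using y2(3) by (simp add: y3_def tr_def algebra_simps)
  define K where "K = length W + g4 + L + g1"
  have y3WK: "occurs_at W y3 (int K)"
    unfolding occurs_at_iff
  proof (intro allI impI)
    fix k assume k: "k < length W"
    have "y3 (int K + int k) = y3 (int (length W) + int g4 + (int L + int g1 + int k))"
      by (simp add: K_def algebra_simps)
    also have "\<dots> = y1 (int L + int g1 + int k)" by (rule y3s) simp
    also have "\<dots> = W ! k" using y1(3) k unfolding occurs_at_iff by blast
    finally show "y3 (int K + int k) = W ! k" .
  qed
  have WK: "length W \<le> K" by (simp add: K_def)
  define z where "z = (\<lambda>j. y3 (j mod int K))"
  have zX: "z \<in> X" unfolding z_def by (rule periodize[OF y3X y3W0 y3WK MW WK])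
  have zper: "\<forall>j. z (j + int K) = z j" by (simp add: z_def)
  have zW: "occurs_at W z 0"
    unfolding occurs_at_iff
  proof (intro allI impI)
    fix k assume k: "k < length W"
    have "z (0 + int k) = y3 (0 + int k)" using k WK by (simp add: z_def)
    thus "z (0 + int k) = W ! k" using y3W0 k unfolding occurs_at_iff by simp
  qed
  have zP: "occurs_at P z (int (length W + g4))"
    unfolding occurs_at_iff
  proof (intro allI impI)
    fix k assume k: "k < length P"
    have "z (int (length W + g4) + int k) = y3 (int (length W) + int g4 + int k)"
      using k by (simp add: z_def K_def L_def algebra_simps)
    also have "\<dots> = y1 (int k)" by (rule y3s) simp
    also have "\<dots> = x0 (0 + int k)" using y1(2) k by (simp add: L_def)
    also have "\<dots> = P ! k" using x0(2) k unfolding occurs_at_iff by simp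
    finally show "z (int (length W + g4) + int k) = P ! k" .
  qed
  show ?thesis using zX WK zper zW zP by blast
qed

end

context eqca begin

lemma wall_per:
  assumes per: "\<forall>j. a (j + K) = a j" and w: "wall m a c"
  shows "wall m a (c + K)"
  unfolding wall_def
proof (intro allI impI)
  fix j assume j: "\<bar>j\<bar> \<le> int m"
  have "a (c + K + j) = a ((c + j) + K)" by (simp add: algebra_simps)
  also have "\<dots> = a (c + j)" using per by blast
  also have "\<dots> = e j" using w j unfolding wall_def by blast
  finally show "a (c + K + j) = e j" .
qed

lemma onto_imp_dense:
  assumes onto: "F ` X = X"
  shows "cdense_in (periodic_points X F) X"
  unfolding cdense_in_def
proof (intro conjI ballI allI impI)
  show "periodic_points X F \<subseteq> X" by (auto simp: periodic_points_def)
  fix x :: "int \<Rightarrow> 'a" and \<epsilon> :: real assume xX: "x \<in> X" and \<epsilon>: "\<epsilon> > 0"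
  define R where "R = max rho M"
  obtain m1 where m1: "m1 \<ge> R" "Blk m1 R" using blocking by blast
  obtain m2 where m2: "m2 \<ge> m1" "Blk m2 m1" using blocking by blast
  have rR: "rho \<le> R" and MR: "M \<le> R" by (auto simp: R_def)
  have "\<exists>p\<in>X. \<exists>Q\<ge>1. (F ^^ Q) p = p \<and> (\<exists>c. wall m2 p c)"
    by (rule exists_periodic_wall[OF onto m2(2) _ m2(1)]) (use rR m1(1) MR m2(1) in simp_all)
  then obtain p Q c where p: "p \<in> X" "Q \<ge> 1" "(F ^^ Q) p = p" "wall m2 p c" by blast
  have pQ: "\<And>i. (F ^^ (Q * i)) p = p"
  proof -
    fix i show "(F ^^ (Q * i)) p = p"
    proof (induction i)
      case 0 show ?case by simp
    next
      case (Suc i)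
      have "(F ^^ (Q * Suc i)) p = (F ^^ Q) ((F ^^ (Q * i)) p)" by (simp add: funpow_add)
      thus ?case using Suc p(3) by simp
    qed
  qed
  have eQ: "\<And>i j. \<bar>j\<bar> \<le> int m1 \<Longrightarrow> (F ^^ (Q * i)) e j = e j"
  proof -
    fix i j assume j: "\<bar>j\<bar> \<le> int m1"
    have "(F ^^ (Q * i)) p (c + j) = (F ^^ (Q * i)) e j" using m2(2) p(1) p(4) j unfolding Blk_def by blast
    moreover have "p (c + j) = e j" using p(4) j m2(1) unfolding wall_def by simp
    ultimately show "(F ^^ (Q * i)) e j = e j" using pQ by simp
  qed
  have keep: "\<And>z c' i. z \<in> X \<Longrightarrow> wall m2 z c' \<Longrightarrow> wall m1 ((F ^^ (Q * i)) z) c'"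
  proof -
    fix z c' i assume z: "z \<in> X" "wall m2 z c'"
    show "wall m1 ((F ^^ (Q * i)) z) c'" unfolding wall_def
    proof (intro allI impI)
      fix j assume j: "\<bar>j\<bar> \<le> int m1"
      have "(F ^^ (Q * i)) z (c' + j) = (F ^^ (Q * i)) e j" using m2(2) z j unfolding Blk_def by blast
      thus "(F ^^ (Q * i)) z (c' + j) = e j" using eQ j by simp
    qed
  qed
  obtain N where N: "(1/2::real)^N < \<epsilon>" using small_pow \<epsilon> by blast
  define P where "P = win x (- int N) (2 * N + 1)"
  define W where "W = win e (- int m2) (2 * m2 + 1)"
  have WL: "W \<in> language X" unfolding W_def by (rule langI[OF eX])
  have MW: "M \<le> length W" using MR m1(1) m2(1) by (simp add: W_def)
  have PL: "P \<in> language X" unfolding P_def by (rule langI[OF xX])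
  obtain z K off where z: "z \<in> X" "length W \<le> K" "\<forall>j. z (j + int K) = z j" "occurs_at W z 0" "occurs_at P z (int off)"
    using periodic_with_walls[OF WL MW PL] by blast
  define z' where "z' = tr (int off + int N) z"
  have z'X: "z' \<in> X" using tr_X z(1) by (simp add: z'_def)
  have z'per: "\<And>j. z' (j + int K) = z' j"
  proof -
    fix j
    have "z' (j + int K) = z ((j + int off + int N) + int K)" by (simp add: z'_def tr_def algebra_simps)
    also have "\<dots> = z (j + int off + int N)" using z(3) by blast
    also have "\<dots> = z' j" by (simp add: z'_def tr_def algebra_simps)
    finally show "z' (j + int K) = z' j" .
  qed
  define c' where "c' = int m2 - int off - int N"
  have wz': "wall m2 z' c'" unfolding wall_def
  proof (intro allI impI)
    fix j assume j: "\<bar>j\<bar> \<le> int m2"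
    define k where "k = nat (int m2 + j)"
    have k: "k < length W" "int m2 + j = 0 + int k" using j unfolding k_def W_def by auto
    have jj: "c' + j + (int off + int N) = 0 + int k" using k(2) by (simp add: c'_def)
    have "z' (c' + j) = z (c' + j + (int off + int N))" by (simp add: z'_def tr_def)
    also have "\<dots> = z (0 + int k)" by (simp only: jj)
    finally have "z' (c' + j) = z (0 + int k)" .
    also have "\<dots> = W ! k" using z(4) k(1) unfolding occurs_at_iff by blast
    also have "\<dots> = e (- int m2 + int k)" using k(1) by (simp add: W_def)
    also have "- int m2 + int k = j" using k(2) by simp
    finally show "z' (c' + j) = e j" .
  qed
  have z'x: "\<forall>j. nat \<bar>j\<bar> \<le> N \<longrightarrow> x j = z' j"
  proof (intro allI impI)
    fix j assume j: "nat \<bar>j\<bar> \<le> N"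
    define k where "k = nat (j + int N)"
    have k: "k < length P" "j = - int N + int k" using j unfolding k_def P_def by auto
    have jj: "j + (int off + int N) = int off + int k" using k(2) by simp
    have "z' j = z (j + (int off + int N))" by (simp add: z'_def tr_def)
    also have "\<dots> = z (int off + int k)" by (simp only: jj)
    finally have "z' j = z (int off + int k)" .
    also have "\<dots> = P ! k" using z(5) k(1) unfolding occurs_at_iff by blast
    also have "\<dots> = x j" using k by (simp add: P_def)
    finally show "x j = z' j" by simp
  qed
  have K0: "K > 0" using z(2) MW M_ge2 by simp
    define Y where "Y = {a \<in> X. (\<forall>j. a (j + int K) = a j) \<and> wall m1 a c'}"
  have Ymod: "\<And>a j. a \<in> Y \<Longrightarrow> a j = a (j mod int K)"
    using periodic_mod K0 unfolding Y_def by blast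
  have finY: "finite Y"
  proof (rule inj_on_finite[of "\<lambda>a. win a 0 K" Y "lang K"])
    show "inj_on (\<lambda>a. win a 0 K) Y"
    proof (rule inj_onI)
      fix a b assume ab: "a \<in> Y" "b \<in> Y" and eq: "win a 0 K = win b 0 K"
      show "a = b"
      proof
        fix j
        define k where "k = nat (j mod int K)"
        have k: "k < K" "int k = j mod int K" using K0 unfolding k_def by (simp_all add: nat_less_iff)
        have "win a 0 K ! k = win b 0 K ! k" using eq by simp
        hence "a (int k) = b (int k)" using k(1) by simp
        thus "a j = b j" using Ymod[OF ab(1), of j] Ymod[OF ab(2), of j] k(2) by simp
      qed
    qed
    show "(\<lambda>a. win a 0 K) ` Y \<subseteq> lang K" using win_lang unfolding Y_def by blast
    show "finite (lang K)" by (rule finite_lang)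
  qed
  define seq where "seq = (\<lambda>i. (F ^^ (Q * i)) z')"
  have seqY: "\<And>i. seq i \<in> Y"
  proof -
    fix i
    have "seq i \<in> X" using Fn_X z'X by (simp add: seq_def)
    moreover have "\<forall>j. seq i (j + int K) = seq i j"
    proof
      fix j
      have "tr (int K) z' = z'" using z'per by (simp add: tr_def)
      hence "tr (int K) (seq i) = seq i" using Fn_tr[OF z'X, of "Q * i" "int K"] by (simp add: seq_def)
      hence "tr (int K) (seq i) j = seq i j" by simp
      thus "seq i (j + int K) = seq i j" by (simp add: tr_def)
    qed
    moreover have "wall m1 (seq i) c'" unfolding seq_def by (rule keep[OF z'X wz'])
    ultimately show "seq i \<in> Y" unfolding Y_def by blast
  qed
  have step: "\<And>i. seq (Suc i) = (F ^^ Q) (seq i)"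
  proof -
    fix i
    have "Q * Suc i = Q + Q * i" by simp
    hence "(F ^^ (Q * Suc i)) z' = (F ^^ Q) ((F ^^ (Q * i)) z')" by (simp only: funpow_add comp_apply)
    thus "seq (Suc i) = (F ^^ Q) (seq i)" by (simp add: seq_def)
  qed
  have injQ: "\<And>a b. a \<in> Y \<Longrightarrow> b \<in> Y \<Longrightarrow> (F ^^ Q) a = (F ^^ Q) b \<Longrightarrow> a = b"
  proof -
    fix a b assume a: "a \<in> Y" and b: "b \<in> Y" and eq: "(F ^^ Q) a = (F ^^ Q) b"
    have aX: "a \<in> X" and bX: "b \<in> X" using a b unfolding Y_def by auto
    have wa: "wall m1 a c'" "wall m1 a (c' + int K)" and wb: "wall m1 b c'" "wall m1 b (c' + int K)"
      using a b wall_per unfolding Y_def by blast+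
    have mM: "M \<le> 2 * m1 + 1" using MR m1(1) by simp
    have cc: "c' \<le> c' + int K" by simp
    have agree: "\<And>i. c' - int m1 \<le> i \<Longrightarrow> i \<le> c' + int K + int m1 \<Longrightarrow> a i = b i"
      by (rule seg_inj[OF onto m1(2) rR m1(1) mM aX bX cc wa wb, where T=Q]) (use eq in simp_all)
    show "a = b"
    proof
      fix j
      define r where "r = c' + (j - c') mod int K"
      have r: "c' \<le> r" "r < c' + int K" using K0 by (auto simp: r_def)
      have "a j = a (j mod int K)" using Ymod[OF a] .
      also have rm: "j mod int K = r mod int K"
      proof -
        have "r mod int K = (c' + (j - c')) mod int K" unfolding r_def by (rule mod_add_right_eq)
        thus ?thesis by simp
      qed
      also have "a (r mod int K) = a r" using Ymod[OF a, of r] by simp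
      also have "a r = b r" using r by (intro agree) simp_all
      also have "b r = b (r mod int K)" using Ymod[OF b] .
      also have "r mod int K = j mod int K" using rm by simp
      also have "b (j mod int K) = b j" using Ymod[OF b, of j] by simp
      finally show "a j = b j" .
    qed
  qed
  have "\<not> inj_on seq {..card Y}"
  proof
    assume inj: "inj_on seq {..card Y}"
    have "card {..card Y} \<le> card Y" using card_inj_on_le[OF inj _ finY] seqY by blast
    thus False by simp
  qed
  then obtain i j where ij: "i \<noteq> j" "seq i = seq j" unfolding inj_on_def by blast
  obtain a d where ad: "d \<ge> 1" "seq a = seq (a + d)"
  proof (cases "i < j")
    case True thus ?thesis using that[of "j - i" i] ij by auto
  next
    case False thus ?thesis using that[of "i - j" j] ij by auto
  qed
  have backw: "\<And>a. seq a = seq (a + d) \<Longrightarrow> seq 0 = seq d"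
  proof -
    fix a show "seq a = seq (a + d) \<Longrightarrow> seq 0 = seq d"
    proof (induction a)
      case 0 thus ?case by simp
    next
      case (Suc a)
      have "(F ^^ Q) (seq a) = seq (Suc a)" using step by simp
      also have "\<dots> = seq (Suc a + d)" using Suc.prems .
      also have "Suc a + d = Suc (a + d)" by simp
      also have "seq (Suc (a + d)) = (F ^^ Q) (seq (a + d))" using step by simp
      finally have "(F ^^ Q) (seq a) = (F ^^ Q) (seq (a + d))" .
      hence "seq a = seq (a + d)" using injQ seqY by blast
      thus ?case by (rule Suc.IH)
    qed
  qed
  have "seq 0 = seq d" using backw[OF ad(2)] .
  hence per: "(F ^^ (Q * d)) z' = z'" by (simp add: seq_def)
  have "Q * d \<ge> 1" using p(2) ad(1) by simp
  hence "z' \<in> periodic_points X F" using per z'X unfolding periodic_points_def by blast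
  moreover have "cdist x z' < \<epsilon>"
  proof -
    have "cdist x z' < (1/2)^N" unfolding cdist_less_pow using z'x .
    thus ?thesis using N by linarith
  qed
  ultimately show "\<exists>y\<in>periodic_points X F. cdist x y < \<epsilon>" by blast
qed

end

theorem mainTheorem1:
  fixes X :: "(int \<Rightarrow> 'a::finite) set"
    and F :: "(int \<Rightarrow> 'a) \<Rightarrow> (int \<Rightarrow> 'a)"
  assumes "transitive_subshift X"
    and "SFT X"
    and "cellular_automaton X F"
    and "\<exists>x. equicontinuity_point X F x"
  shows "F ` X = X \<longleftrightarrow> cdense_in (periodic_points X F) X"
proof -
  obtain e where e: "equicontinuity_point X F e" using assms(4) by blast
  interpret eqca X F e
  proof unfold_locales
    show "transitive_subshift X" by (rule assms(1))
    show "SFT X" by (rule assms(2))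
    show "cellular_automaton X F" by (rule assms(3))
    show "equicontinuity_point X F e" by (rule e)
  qed
  show ?thesis using dense_imp_onto onto_imp_dense by blast
qed

end
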